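(* Let $d_k$ denote the number of edges of $\mathbf{DCM}_k$ for $k\ge 1$, set $d_0=1$, let $z(x)=\sum_{k\ge 0}d_kx^k$ and $Z(x)=2z(x)-1$. Then, as formal power series, $$Z(x)=1+\frac{2x^2Z(x)^4}{1-xZ(x)^2}.$$
   Context: Let $k\ge 1$ and let $X_{2k}=\{P_1,\dots,P_{2k}\}$ be $2k$ points in convex position in the plane, labeled in clockwise cyclic order. A matching of $X_{2k}$ means a set of $k$ pairwise non-crossing straight segments (edges) with endpoints in $X_{2k}$ covering every point exactly once. Two matchings $M,M'$ of $X_{2k}$ are disjoint compatible if they have no common edge and no edge of $M$ crosses an edge of $M'$. $\mathbf{DCM}_k$ is the graph whose vertices are the matchings of $X_{2k}$, two being adjacent iff they are disjoint compatible. *)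

theory Defs
  imports "HOL-Computational_Algebra.Formal_Power_Series"
begin

text \<open>Points of X_{2k} are labelled 0,...,2k-1 in clockwise cyclic order.
  For points in (strictly) convex position, two segments with four distinct endpoints
  cross iff their endpoints interleave in the cyclic order; segments sharing an
  endpoint do not cross.\<close>

definition crosses :: "nat set \<Rightarrow> nat set \<Rightarrow> bool" where
  "crosses e f \<longleftrightarrow> (\<exists>a b c d. e = {a, b} \<and> f = {c, d} \<and> a < b \<and> c < d \<and>
      ((a < c \<and> c < b \<and> b < d) \<or> (c < a \<and> a < d \<and> d < b)))"

definition is_edge :: "nat \<Rightarrow> nat set \<Rightarrow> bool" where
  "is_edge n e \<longleftrightarrow> (\<exists>i j. e = {i, j} \<and> i < j \<and> j < n)"

definition is_matching :: "nat \<Rightarrow> nat set set \<Rightarrow> bool" where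
  "is_matching n M \<longleftrightarrow>
     (\<forall>e\<in>M. is_edge n e) \<and>
     (\<forall>i<n. \<exists>!e. e \<in> M \<and> i \<in> e) \<and>
     (\<forall>e\<in>M. \<forall>f\<in>M. \<not> crosses e f)"

definition disjoint_compatible :: "nat set set \<Rightarrow> nat set set \<Rightarrow> bool" where
  "disjoint_compatible M M' \<longleftrightarrow> M \<inter> M' = {} \<and> (\<forall>e\<in>M. \<forall>f\<in>M'. \<not> crosses e f)"

definition dcm_adj :: "nat \<Rightarrow> nat set set \<Rightarrow> nat set set \<Rightarrow> bool" where
  "dcm_adj k M M' \<longleftrightarrow> is_matching (2*k) M \<and> is_matching (2*k) M' \<and> disjoint_compatible M M'"

definition dcm_edge_set :: "nat \<Rightarrow> nat set set set set" where
  "dcm_edge_set k = {{M, M'} | M M'. dcm_adj k M M'}"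

definition dcm_d :: "nat \<Rightarrow> nat" where
  "dcm_d k = (if k = 0 then 1 else card (dcm_edge_set k))"

end

theory Submission imports Defs begin

definition pm :: "nat set \<Rightarrow> nat set set \<Rightarrow> bool" where
 "pm S M \<longleftrightarrow> (\<forall>e\<in>M. \<exists>i j. e = {i,j} \<and> i < j \<and> i \<in> S \<and> j \<in> S) \<and>
     (\<forall>i\<in>S. \<exists>!e. e \<in> M \<and> i \<in> e) \<and> (\<forall>e\<in>M. \<forall>f\<in>M. \<not> crosses e f)"

definition PP :: "nat set \<Rightarrow> nat set \<Rightarrow> (nat set set \<times> nat set set) set" where
  "PP S1 S2 = {(M,M'). pm S1 M \<and> pm S2 M' \<and> disjoint_compatible M M'}"

definition cnt :: "nat set \<Rightarrow> nat set \<Rightarrow> nat" where "cnt S1 S2 = card (PP S1 S2)"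

lemma is_matching_pm: "is_matching n M = pm {0..<n} M"
proof -
  have eq: "\<And>i j. (i<j \<and> i<(n::nat) \<and> j<n) = (i<j \<and> j<n)" by auto
  have eq2: "\<And>P. (\<forall>i<n. P i) = (\<forall>i\<in>{0..<n}. P i)" by auto
  show ?thesis unfolding is_matching_def pm_def is_edge_def eq2 
    unfolding atLeastLessThan_iff by (simp only: eq le0 simp_thms)
qed

lemma crosses_sym: "crosses e f = crosses f e" unfolding crosses_def by blast

lemma crossesI: "a < c \<Longrightarrow> c < b \<Longrightarrow> b < d \<Longrightarrow> crosses {a,b} {c,d}"
  unfolding crosses_def by (rule exI[of _ a], rule exI[of _ b], rule exI[of _ c], rule exI[of _ d]) auto

lemma ord_pair_eq: "(a::nat) < b \<Longrightarrow> c < d \<Longrightarrow> {a,b} = {c,d} \<Longrightarrow> a = c \<and> b = d"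
  by (auto simp: doubleton_eq_iff)

lemma crossesE:
  assumes "crosses e f"
  obtains a b c d where "e = {a,b}" "f = {c,d}" "a < b" "c < d"
    "(a < c \<and> c < b \<and> b < d) \<or> (c < a \<and> a < d \<and> d < b)"
  using assms unfolding crosses_def by blast

lemma crosses_ord: "a < b \<Longrightarrow> c < d \<Longrightarrow> crosses {a,b} {c,d} \<longleftrightarrow> (a<c \<and> c<b \<and> b<d \<or> c<a \<and> a<d \<and> d<b)"
proof
  assume o: "a < b" "c < d" and cr: "crosses {a,b} {c,d}"
  from cr obtain p q r s where pq: "{a,b} = {p,q}" "{c,d} = {r,s}" "p < q" "r < s"
    "(p < r \<and> r < q \<and> q < s) \<or> (r < p \<and> p < s \<and> s < q)" by (rule crossesE)
  have "a = p \<and> b = q" using ord_pair_eq[OF o(1) pq(3) pq(1)] .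
  moreover have "c = r \<and> d = s" using ord_pair_eq[OF o(2) pq(4) pq(2)] .
  ultimately show "(a<c \<and> c<b \<and> b<d \<or> c<a \<and> a<d \<and> d<b)" using pq(5) by simp
next
  assume "a < b" "c < d" "(a<c \<and> c<b \<and> b<d \<or> c<a \<and> a<d \<and> d<b)"
  then show "crosses {a,b} {c,d}" unfolding crosses_def by blast
qed

lemma nocross_iv: assumes "e \<subseteq> {l..h}" "f \<inter> {l<..<h} = {}" shows "\<not> crosses e f"
proof
  assume "crosses e f"
  then obtain a b c d where p: "e = {a,b}" "f = {c,d}" "a < b" "c < d"
    "(a < c \<and> c < b \<and> b < d) \<or> (c < a \<and> a < d \<and> d < b)" by (rule crossesE)
  have "l \<le> a" "b \<le> h" using assms(1) p(1) by auto
  show False using p(5)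
  proof
    assume "a < c \<and> c < b \<and> b < d"
    then have "c \<in> {l<..<h}" using \<open>l \<le> a\<close> \<open>b \<le> h\<close> by auto
    then show False using assms(2) p(2) by blast
  next
    assume "c < a \<and> a < d \<and> d < b"
    then have "d \<in> {l<..<h}" using \<open>l \<le> a\<close> \<open>b \<le> h\<close> by auto
    then show False using assms(2) p(2) by blast
  qed
qed

lemma pm_edge: "pm S M \<Longrightarrow> e \<in> M \<Longrightarrow> \<exists>i j. e = {i,j} \<and> i < j \<and> i \<in> S \<and> j \<in> S"
  unfolding pm_def by blast

lemma pm_sub: "pm S M \<Longrightarrow> e \<in> M \<Longrightarrow> e \<subseteq> S"
  using pm_edge by blast

lemma pm_ne: "pm S M \<Longrightarrow> e \<in> M \<Longrightarrow> e \<noteq> {}"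
  using pm_edge by blast

lemma pm_uniq: "pm S M \<Longrightarrow> e \<in> M \<Longrightarrow> f \<in> M \<Longrightarrow> x \<in> e \<Longrightarrow> x \<in> f \<Longrightarrow> e = f"
proof -
  assume a: "pm S M" "e \<in> M" "f \<in> M" "x \<in> e" "x \<in> f"
  then have "x \<in> S" using pm_sub by blast
  then have "\<exists>!e. e \<in> M \<and> x \<in> e" using a(1) unfolding pm_def by blast
  then show ?thesis using a by blast
qed

lemma pm_ex: "pm S M \<Longrightarrow> x \<in> S \<Longrightarrow> \<exists>e\<in>M. x \<in> e"
  unfolding pm_def by blast

lemma pm_partner: "pm S M \<Longrightarrow> x \<in> S \<Longrightarrow> \<exists>z. {x,z} \<in> M \<and> z \<noteq> x \<and> z \<in> S"
proof -
  assume a: "pm S M" "x \<in> S"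
  then obtain e where e: "e \<in> M" "x \<in> e" using pm_ex by blast
  then obtain i j where "e = {i,j}" "i < j" "i \<in> S" "j \<in> S" using pm_edge a by blast
  then show ?thesis using e by (auto simp: insert_commute)
qed

lemma pm_nc: "pm S M \<Longrightarrow> e \<in> M \<Longrightarrow> f \<in> M \<Longrightarrow> \<not> crosses e f"
  unfolding pm_def by blast

lemma pm_finite: assumes "finite S" "pm S M" shows "finite M"
proof -
  have "M \<subseteq> Pow S" using pm_sub[OF assms(2)] by blast
  then show ?thesis using assms(1) finite_subset by blast
qed

lemma pm_card: "finite S \<Longrightarrow> pm S M \<Longrightarrow> card S = 2 * card M"
proof -
  assume f: "finite S" and p: "pm S M"
  have U: "\<Union>M = S" using pm_sub[OF p] pm_ex[OF p] by blast
  have pd: "pairwise disjnt M"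
    unfolding pairwise_def disjnt_def using pm_uniq[OF p] by blast
  have c2: "\<And>e. e \<in> M \<Longrightarrow> card e = 2" using pm_edge[OF p] by fastforce
  have fe: "\<forall>e\<in>M. finite e" using pm_edge[OF p] by fastforce
  have "card S = sum card M" using card_Union_disjoint[OF pd] fe U by simp
  also have "\<dots> = sum (\<lambda>_. 2) M" using c2 by (meson sum.cong)
  also have "\<dots> = 2 * card M" by simp
  finally show ?thesis .
qed

lemma pm_even: assumes "finite S" "pm S M" shows "even (card S)"
  unfolding pm_card[OF assms] by simp

lemma pmI:
  assumes "\<And>e. e \<in> M \<Longrightarrow> \<exists>i j. e = {i,j} \<and> i < j \<and> i \<in> S \<and> j \<in> S"
    and "\<And>x. x \<in> S \<Longrightarrow> \<exists>e\<in>M. x \<in> e"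
    and "\<And>e f x. e \<in> M \<Longrightarrow> f \<in> M \<Longrightarrow> x \<in> e \<Longrightarrow> x \<in> f \<Longrightarrow> e = f"
    and "\<And>e f. e \<in> M \<Longrightarrow> f \<in> M \<Longrightarrow> \<not> crosses e f"
  shows "pm S M"
  unfolding pm_def
proof (intro conjI ballI)
  fix e assume "e \<in> M" then show "\<exists>i j. e = {i,j} \<and> i < j \<and> i \<in> S \<and> j \<in> S" using assms(1) by blast
next
  fix x assume x: "x \<in> S"
  then obtain e where e: "e \<in> M" "x \<in> e" using assms(2) by blast
  show "\<exists>!e. e \<in> M \<and> x \<in> e"
  proof (rule ex1I[of _ e])
    show "e \<in> M \<and> x \<in> e" using e by blast
  next
    fix f assume "f \<in> M \<and> x \<in> f" then show "f = e" using assms(3) e by blast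
  qed
next
  fix e f assume "e \<in> M" "f \<in> M" then show "\<not> crosses e f" using assms(4) by blast
qed

lemma pm_restrict:
  assumes p: "pm S M" and X: "X \<subseteq> S" and c: "\<forall>e\<in>M. e \<inter> X \<noteq> {} \<longrightarrow> e \<subseteq> X"
  shows "pm X {e\<in>M. e \<subseteq> X}"
proof (rule pmI)
  fix e assume e: "e \<in> {e\<in>M. e \<subseteq> X}"
  then obtain i j where "e = {i,j}" "i < j" using pm_edge[OF p] by blast
  then show "\<exists>i j. e = {i,j} \<and> i < j \<and> i \<in> X \<and> j \<in> X" using e by blast
next
  fix x assume x: "x \<in> X"
  obtain e where "e \<in> M" "x \<in> e" using pm_ex[OF p] x X by blast
  then show "\<exists>e\<in>{e\<in>M. e \<subseteq> X}. x \<in> e" using c x by blast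
next
  fix e f x assume "e \<in> {e\<in>M. e \<subseteq> X}" "f \<in> {e\<in>M. e \<subseteq> X}" "x \<in> e" "x \<in> f"
  then show "e = f" using pm_uniq[OF p, of e f x] by blast
next
  fix e f assume "e \<in> {e\<in>M. e \<subseteq> X}" "f \<in> {e\<in>M. e \<subseteq> X}"
  then show "\<not> crosses e f" using pm_nc[OF p, of e f] by blast
qed

lemma pm_compl:
  assumes p: "pm S M" and c: "\<forall>e\<in>M. e \<inter> X \<noteq> {} \<longrightarrow> e \<subseteq> X"
  shows "pm (S - X) {e\<in>M. \<not> e \<subseteq> X}"
proof (rule pmI)
  fix e assume e: "e \<in> {e\<in>M. \<not> e \<subseteq> X}"
  then obtain i j where ij: "e = {i,j}" "i < j" "i \<in> S" "j \<in> S" using pm_edge[OF p] by blast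
  have "e \<inter> X = {}" using c e by blast
  then show "\<exists>i j. e = {i,j} \<and> i < j \<and> i \<in> S - X \<and> j \<in> S - X" using ij by blast
next
  fix x assume x: "x \<in> S - X"
  obtain e where "e \<in> M" "x \<in> e" using pm_ex[OF p] x by blast
  then show "\<exists>e\<in>{e\<in>M. \<not> e \<subseteq> X}. x \<in> e" using x by blast
next
  fix e f x assume "e \<in> {e\<in>M. \<not> e \<subseteq> X}" "f \<in> {e\<in>M. \<not> e \<subseteq> X}" "x \<in> e" "x \<in> f"
  then show "e = f" using pm_uniq[OF p, of e f x] by blast
next
  fix e f assume "e \<in> {e\<in>M. \<not> e \<subseteq> X}" "f \<in> {e\<in>M. \<not> e \<subseteq> X}"
  then show "\<not> crosses e f" using pm_nc[OF p, of e f] by blast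
qed

lemma pm_union:
  assumes pA: "pm A M" and pB: "pm B N" and AB: "A \<inter> B = {}" and nc: "\<forall>e\<in>M. \<forall>f\<in>N. \<not> crosses e f"
  shows "pm (A \<union> B) (M \<union> N)"
proof (rule pmI)
  fix e assume e: "e \<in> M \<union> N"
  show "\<exists>i j. e = {i,j} \<and> i < j \<and> i \<in> A \<union> B \<and> j \<in> A \<union> B"
  proof (cases "e \<in> M")
    case True
    then obtain i j where "e = {i,j}" "i < j" "i \<in> A" "j \<in> A" using pm_edge[OF pA] by blast
    then show ?thesis by blast
  next
    case False
    then have "e \<in> N" using e by blast
    then obtain i j where "e = {i,j}" "i < j" "i \<in> B" "j \<in> B" using pm_edge[OF pB] by blast
    then show ?thesis by blast
  qed
next
  fix x assume x: "x \<in> A \<union> B"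
  show "\<exists>e\<in>M \<union> N. x \<in> e"
  proof (cases "x \<in> A")
    case True then show ?thesis using pm_ex[OF pA, of x] by blast
  next
    case False then show ?thesis using pm_ex[OF pB, of x] x by blast
  qed
next
  fix e f x assume e: "e \<in> M \<union> N" and f: "f \<in> M \<union> N" and x: "x \<in> e" "x \<in> f"
  have sM: "\<And>g. g \<in> M \<Longrightarrow> g \<subseteq> A" using pm_sub[OF pA] by blast
  have sN: "\<And>g. g \<in> N \<Longrightarrow> g \<subseteq> B" using pm_sub[OF pB] by blast
  show "e = f"
  proof (cases "e \<in> M")
    case True
    then have "x \<in> A" using sM x by blast
    then have "f \<in> M" using f sN x AB by blast
    then show ?thesis using pm_uniq[OF pA True _ x] by blast
  next
    case False
    then have eN: "e \<in> N" using e by blast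
    then have "x \<in> B" using sN x by blast
    then have "f \<in> N" using f sM x AB by blast
    then show ?thesis using pm_uniq[OF pB eN _ x] by blast
  qed
next
  fix e f assume e: "e \<in> M \<union> N" and f: "f \<in> M \<union> N"
  show "\<not> crosses e f"
  proof (cases "e \<in> M")
    case True
    then show ?thesis using f nc pm_nc[OF pA True] crosses_sym[of e f] by blast
  next
    case False
    then have eN: "e \<in> N" using e by blast
    then show ?thesis using f nc pm_nc[OF pB eN] crosses_sym[of f e] by blast
  qed
qed

lemma pm_single: "a < b \<Longrightarrow> pm {a,b} {{a,b}}"
  unfolding pm_def using nocross_iv[of "{a,b}" a b "{a,b}"] by auto

lemma pm_empty: "pm {} {}" unfolding pm_def by auto

lemma pm_empty_iff: "pm {} M \<longleftrightarrow> M = {}" unfolding pm_def by auto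

lemma no_escape:
  assumes p: "pm S M" and f: "finite X" and X: "X \<subseteq> S" and q: "q \<notin> X"
    and c: "\<forall>e\<in>M. e \<inter> X \<noteq> {} \<longrightarrow> e \<subseteq> insert q X" and ev: "even (card X)"
  shows "\<forall>e\<in>M. e \<inter> X \<noteq> {} \<longrightarrow> e \<subseteq> X"
proof (rule ccontr)
  assume "\<not> ?thesis"
  then obtain e0 where e0: "e0 \<in> M" "e0 \<inter> X \<noteq> {}" "\<not> e0 \<subseteq> X" by blast
  then have qe: "q \<in> e0" using c by blast
  obtain x0 where x0: "x0 \<in> e0" "x0 \<in> X" using e0 by blast
  have c2: "\<forall>e\<in>M. e \<inter> (X - {x0}) \<noteq> {} \<longrightarrow> e \<subseteq> X - {x0}"
  proof (intro ballI impI)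
    fix e assume e: "e \<in> M" "e \<inter> (X - {x0}) \<noteq> {}"
    then have s: "e \<subseteq> insert q X" using c by blast
    have "e \<noteq> e0"
    proof
      assume "e = e0"
      then obtain i j where ij: "e = {i,j}" "i < j" using pm_edge[OF p e(1)] by blast
      then show False using e(2) qe x0 q \<open>e = e0\<close> by auto
    qed
    then have "q \<notin> e" "x0 \<notin> e" using pm_uniq[OF p e(1) e0(1)] qe x0 by blast+
    then show "e \<subseteq> X - {x0}" using s by blast
  qed
  have pX0: "pm (X - {x0}) {e\<in>M. e \<subseteq> X - {x0}}" using pm_restrict[OF p _ c2] X by blast
  have e1: "even (card (X - {x0}))" using pm_even[OF _ pX0] f by simp
  have e2: "card (X - {x0}) = card X - 1" using card_Diff_singleton[OF x0(2)] .
  have "X \<noteq> {}" using x0(2) by blast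
  then have e3: "card X \<ge> 1" using f by (simp add: Suc_le_eq card_gt_0_iff)
  have "even (card X - 1)" using e1 e2 by simp
  then show False using ev e3 by presburger
qed

lemma dc_mono: "disjoint_compatible M M' \<Longrightarrow> N \<subseteq> M \<Longrightarrow> N' \<subseteq> M' \<Longrightarrow> disjoint_compatible N N'"
  unfolding disjoint_compatible_def by blast

lemma dc_sym: "disjoint_compatible M M' = disjoint_compatible M' M"
  unfolding disjoint_compatible_def using crosses_sym by blast

lemma finite_PP: "finite S1 \<Longrightarrow> finite S2 \<Longrightarrow> finite (PP S1 S2)"
proof -
  assume "finite S1" "finite S2"
  have "PP S1 S2 \<subseteq> Pow (Pow S1) \<times> Pow (Pow S2)"
    unfolding PP_def using pm_sub by blast
  then show ?thesis using \<open>finite S1\<close> \<open>finite S2\<close> by (meson finite_Pow_iff finite_SigmaI finite_subset)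
qed

lemma cnt_swap: "cnt S1 S2 = cnt S2 S1"
proof -
  have "PP S2 S1 = prod.swap ` PP S1 S2" unfolding PP_def using dc_sym by auto
  then show ?thesis unfolding cnt_def by (simp add: card_image)
qed

lemma cnt_empty: "cnt {} {} = 1"
proof -
  have "PP {} {} = {({},{})}" unfolding PP_def disjoint_compatible_def using pm_empty_iff by auto
  then show ?thesis unfolding cnt_def by simp
qed

lemma nc: "e \<subseteq> {l..h} \<Longrightarrow> f \<inter> {l<..<h} = {} \<Longrightarrow> \<not> crosses e f \<and> \<not> crosses f e"
  using nocross_iv[of e l h f] crosses_sym[of e f] by blast

lemma edge_other: "pm S M \<Longrightarrow> e \<in> M \<Longrightarrow> x \<in> e \<Longrightarrow> \<exists>z. e = {x,z} \<and> z \<in> S \<and> z \<noteq> x"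
proof -
  assume a: "pm S M" "e \<in> M" "x \<in> e"
  then obtain i j where "e = {i,j}" "i < j" "i \<in> S" "j \<in> S" using pm_edge by blast
  then show ?thesis using a(3) by (auto simp: insert_commute)
qed

lemma edge_sub2: "pm S M \<Longrightarrow> e \<in> M \<Longrightarrow> e \<subseteq> {u,v} \<Longrightarrow> e = {u,v}"
proof -
  assume a: "pm S M" "e \<in> M" "e \<subseteq> {u,v}"
  then obtain i j where "e = {i,j}" "i < j" using pm_edge by blast
  then show ?thesis using a(3) by auto
qed

lemma PP_iff: "(M,M') \<in> PP S1 S2 \<longleftrightarrow> pm S1 M \<and> pm S2 M' \<and> disjoint_compatible M M'"
  unfolding PP_def by simp

lemma filt3: "(\<forall>e\<in>A. P e) \<Longrightarrow> (\<forall>e\<in>B. \<not> P e) \<Longrightarrow> (\<forall>e\<in>C. \<not> P e) \<Longrightarrow> {e\<in>A \<union> B \<union> C. P e} = A"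
  by blast

lemma filt3b: "(\<forall>e\<in>A. \<not> P e) \<Longrightarrow> (\<forall>e\<in>B. P e) \<Longrightarrow> (\<forall>e\<in>C. \<not> P e) \<Longrightarrow> {e\<in>A \<union> B \<union> C. P e} = B"
  by blast

lemma filt2: "(\<forall>e\<in>A. P e) \<Longrightarrow> (\<forall>e\<in>B. \<not> P e) \<Longrightarrow> {e\<in>A \<union> B. P e} = A"
  by blast

lemma filt2b: "(\<forall>e\<in>A. \<not> P e) \<Longrightarrow> (\<forall>e\<in>B. P e) \<Longrightarrow> {e\<in>A \<union> B. P e} = B"
  by blast

lemma disj_edges: "pm A N \<Longrightarrow> B \<inter> A = {} \<Longrightarrow> e \<in> N \<Longrightarrow> \<not> e \<subseteq> B"
  using pm_sub[of A N e] pm_ne[of A N e] by blast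

lemma G:
  fixes a y :: nat
  assumes ay: "a < y" and RA: "RA \<subseteq> {y<..}" and RB: "RB \<subseteq> {y..}" and fA: "finite RA" and fB: "finite RB"
  shows "card {p \<in> PP (insert a ({a<..<y} \<union> insert y RA)) ({a<..<y} \<union> RB). {a,y} \<in> fst p}
         = cnt {a<..<y} {a<..<y} * cnt RA RB"
proof -
  define X where "X = {a<..<y}"
  define SA where "SA = insert a (X \<union> insert y RA)"
  define SB where "SB = X \<union> RB"
  define Fib where "Fib = {p \<in> PP SA SB. {a,y} \<in> fst p}"
  have fX: "finite X" unfolding X_def by simp
  have XA: "X \<inter> RA = {}" "X \<inter> RB = {}" "a \<notin> RA" "a \<notin> RB" "y \<notin> RA" "a \<notin> X" "y \<notin> X"
    "a \<notin> SB" "X \<subseteq> SA" "X \<subseteq> SB"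
    using RA RB ay unfolding X_def SB_def SA_def by auto
  have XI: "X \<subseteq> {Suc a..y - 1}" unfolding X_def by auto
  have XI2: "{a,y} \<inter> {Suc a<..<y - 1} = {}" by auto
  define D where "D = (\<lambda>(M::nat set set,M'::nat set set). (({e\<in>M. e \<subseteq> X}, {e\<in>M'. e \<subseteq> X}),
       ({e\<in>M. \<not> e \<subseteq> X \<and> \<not> e \<subseteq> {a,y}}, {e\<in>M'. \<not> e \<subseteq> X})))"
  define C where "C = (\<lambda>((M1::nat set set,M1'::nat set set),(M2::nat set set,M2'::nat set set)).
       (M1 \<union> M2 \<union> {{a,y}}, M1' \<union> M2'))"
  have "bij_betw D Fib (PP X X \<times> PP RA RB)"
  proof (rule bij_betw_byWitness[where f'=C])
    show "\<forall>p\<in>Fib. C (D p) = p"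
    proof
      fix p assume "p \<in> Fib"
      obtain M M' where p1: "p = (M,M')" by (cases p) auto
      have p: "p = (M,M')" "pm SA M" "{a,y} \<in> M"
        using \<open>p \<in> Fib\<close> unfolding p1 Fib_def mem_Collect_eq PP_iff fst_conv by simp_all
      have "M = {e\<in>M. e \<subseteq> X} \<union> {e\<in>M. \<not> e \<subseteq> X \<and> \<not> e \<subseteq> {a,y}} \<union> {{a,y}}"
        using edge_sub2[OF p(2)] p(3) by blast
      then show "C (D p) = p" unfolding C_def D_def p(1) by auto
    qed
    show "\<forall>q\<in>PP X X \<times> PP RA RB. D (C q) = q"
    proof
      fix q assume q0: "q \<in> PP X X \<times> PP RA RB"
      obtain M1 M1' M2 M2' where q1: "q = ((M1,M1'),(M2,M2'))" by (cases q) auto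
      have q: "q = ((M1,M1'),(M2,M2'))" "pm X M1" "pm X M1'" "pm RA M2" "pm RB M2'"
        using q0 unfolding q1 mem_Times_iff fst_conv snd_conv PP_iff by simp_all
      have sX1: "\<forall>e\<in>M1. e \<subseteq> X" using pm_sub[OF q(2)] by blast
      have sX1': "\<forall>e\<in>M1'. e \<subseteq> X" using pm_sub[OF q(3)] by blast
      have nX2: "\<forall>e\<in>M2. \<not> e \<subseteq> X" using disj_edges[OF q(4)] XA(1) by blast
      have nX2': "\<forall>e\<in>M2'. \<not> e \<subseteq> X" using disj_edges[OF q(5)] XA(2) by blast
      have nX1: "\<forall>e\<in>M1. \<not> e \<subseteq> {a,y}" using disj_edges[OF q(2), of "{a,y}"] XA(6,7) by blast
      have nX2a: "\<forall>e\<in>M2. \<not> e \<subseteq> {a,y}" using disj_edges[OF q(4), of "{a,y}"] XA(3,5) by blast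
      have "{e\<in>M1 \<union> M2 \<union> {{a,y}}. e \<subseteq> X} = M1"
        by (rule filt3) (use sX1 nX2 XA(6) in auto)
      moreover have "{e\<in>M1' \<union> M2'. e \<subseteq> X} = M1'"
        by (rule filt2) (use sX1' nX2' in auto)
      moreover have "{e\<in>M1 \<union> M2 \<union> {{a,y}}. \<not> e \<subseteq> X \<and> \<not> e \<subseteq> {a,y}} = M2"
        by (rule filt3b) (use sX1 nX2 nX2a in auto)
      moreover have "{e\<in>M1' \<union> M2'. \<not> e \<subseteq> X} = M2'"
        by (rule filt2b) (use sX1' nX2' in auto)
      ultimately show "D (C q) = q" unfolding C_def D_def q(1) by simp
    qed
    show "D ` Fib \<subseteq> PP X X \<times> PP RA RB"
    proof
      fix r assume "r \<in> D ` Fib"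
      then obtain p where p0: "r = D p" "p \<in> Fib" by blast
      obtain M M' where p1: "p = (M,M')" by (cases p) auto
      have p: "r = D (M,M')" "pm SA M" "pm SB M'" "disjoint_compatible M M'" "{a,y} \<in> M"
        using p0 unfolding p1 Fib_def mem_Collect_eq PP_iff fst_conv by simp_all
      have closM: "\<forall>e\<in>M. e \<inter> X \<noteq> {} \<longrightarrow> e \<subseteq> X"
      proof (intro ballI impI)
        fix e assume e: "e \<in> M" "e \<inter> X \<noteq> {}"
        then obtain x where x: "x \<in> e" "x \<in> X" by blast
        then obtain z where z: "e = {x,z}" "z \<in> SA" "z \<noteq> x" using edge_other[OF p(2) e(1)] by blast
        have "z \<noteq> a" using pm_uniq[OF p(2) e(1) p(5), of a] z x XA by auto
        moreover have "z \<noteq> y" using pm_uniq[OF p(2) e(1) p(5), of y] z x XA by auto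
        moreover have "z \<notin> RA"
        proof
          assume "z \<in> RA"
          then have "crosses {a,y} {x,z}" using RA x(2) unfolding X_def by (intro crossesI) auto
          then show False using pm_nc[OF p(2) p(5) e(1)] z(1) by simp
        qed
        ultimately show "e \<subseteq> X" using z x(2) unfolding SA_def by auto
      qed
      have pX: "pm X {e\<in>M. e \<subseteq> X}" using pm_restrict[OF p(2) XA(9) closM] .
      have evX: "even (card X)" using pm_even[OF fX pX] .
      have closM'0: "\<forall>e\<in>M'. e \<inter> X \<noteq> {} \<longrightarrow> e \<subseteq> insert y X"
      proof (intro ballI impI)
        fix e assume e: "e \<in> M'" "e \<inter> X \<noteq> {}"
        then obtain x where x: "x \<in> e" "x \<in> X" by blast
        then obtain z where z: "e = {x,z}" "z \<in> SB" "z \<noteq> x" using edge_other[OF p(3) e(1)] by blast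
        have "z \<in> X \<or> z = y"
        proof (rule ccontr)
          assume "\<not> (z \<in> X \<or> z = y)"
          then have "z \<in> RB" "z \<noteq> y" using z(2) unfolding SB_def by auto
          then have "y < z" using RB by auto
          then have "crosses {a,y} {x,z}" using x(2) unfolding X_def by (intro crossesI) auto
          then show False using p(4) p(5) e(1) z(1) unfolding disjoint_compatible_def by blast
        qed
        then show "e \<subseteq> insert y X" using z x by auto
      qed
      have closM': "\<forall>e\<in>M'. e \<inter> X \<noteq> {} \<longrightarrow> e \<subseteq> X"
        using no_escape[OF p(3) fX XA(10) XA(7) closM'0 evX] .
      have pX': "pm X {e\<in>M'. e \<subseteq> X}" using pm_restrict[OF p(3) XA(10) closM'] .
      have pR0: "pm (SA - X) {e\<in>M. \<not> e \<subseteq> X}" using pm_compl[OF p(2) closM] .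
      have clay: "\<forall>e\<in>{e\<in>M. \<not> e \<subseteq> X}. e \<inter> {a,y} \<noteq> {} \<longrightarrow> e \<subseteq> {a,y}"
        using pm_uniq[OF p(2) _ p(5)] by blast
      have pR: "pm (SA - X - {a,y}) {e\<in>{e\<in>M. \<not> e \<subseteq> X}. \<not> e \<subseteq> {a,y}}" using pm_compl[OF pR0 clay] .
      have "SA - X - {a,y} = RA" unfolding SA_def using XA by auto
      then have pRA: "pm RA {e\<in>M. \<not> e \<subseteq> X \<and> \<not> e \<subseteq> {a,y}}" using pR by simp
      have pR': "pm (SB - X) {e\<in>M'. \<not> e \<subseteq> X}" using pm_compl[OF p(3) closM'] .
      have "SB - X = RB" unfolding SB_def using XA by auto
      then have pRB: "pm RB {e\<in>M'. \<not> e \<subseteq> X}" using pR' by simp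
      have d1: "disjoint_compatible {e\<in>M. e \<subseteq> X} {e\<in>M'. e \<subseteq> X}" by (rule dc_mono[OF p(4)]) auto
      have d2: "disjoint_compatible {e\<in>M. \<not> e \<subseteq> X \<and> \<not> e \<subseteq> {a,y}} {e\<in>M'. \<not> e \<subseteq> X}" by (rule dc_mono[OF p(4)]) auto
      show "r \<in> PP X X \<times> PP RA RB" unfolding p(1) D_def case_prod_conv mem_Times_iff fst_conv snd_conv PP_iff
        using pX pX' pRA pRB d1 d2 by blast
    qed
    show "C ` (PP X X \<times> PP RA RB) \<subseteq> Fib"
    proof
      fix r assume "r \<in> C ` (PP X X \<times> PP RA RB)"
      then obtain q where q0: "r = C q" "q \<in> PP X X \<times> PP RA RB" by blast
      obtain M1 M1' M2 M2' where q1: "q = ((M1,M1'),(M2,M2'))" by (cases q) auto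
      have q: "r = C ((M1,M1'),(M2,M2'))" "pm X M1" "pm X M1'" "pm RA M2" "pm RB M2'"
        "disjoint_compatible M1 M1'" "disjoint_compatible M2 M2'"
        using q0 unfolding q1 mem_Times_iff fst_conv snd_conv PP_iff by simp_all
      have Xa: "X \<subseteq> {a..y}" unfolding X_def by auto
      have Ra: "RA \<inter> {a<..<y} = {}" "RB \<inter> {a<..<y} = {}" using RA RB by auto
      have s1: "\<And>e. e \<in> M1 \<Longrightarrow> e \<subseteq> {a..y}" "\<And>e. e \<in> M1' \<Longrightarrow> e \<subseteq> {a..y}"
        using pm_sub[OF q(2)] pm_sub[OF q(3)] Xa by blast+
      have s1': "\<And>e. e \<in> M1 \<Longrightarrow> e \<subseteq> {Suc a..y-1}" "\<And>e. e \<in> M1' \<Longrightarrow> e \<subseteq> {Suc a..y-1}"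
        using pm_sub[OF q(2)] pm_sub[OF q(3)] XI by blast+
      have s2: "\<And>e. e \<in> M2 \<Longrightarrow> e \<inter> {a<..<y} = {}" "\<And>e. e \<in> M2' \<Longrightarrow> e \<inter> {a<..<y} = {}"
        using pm_sub[OF q(4)] pm_sub[OF q(5)] Ra by blast+
      have say: "{a,y} \<subseteq> {a..y}" "{a,y} \<inter> {a<..<y} = {}" using ay by auto
      have m12: "pm (X \<union> RA) (M1 \<union> M2)"
        by (rule pm_union[OF q(2) q(4) XA(1)]) (use nc[OF s1(1) s2(1)] in blast)
      have m: "pm ((X \<union> RA) \<union> {a,y}) ((M1 \<union> M2) \<union> {{a,y}})"
        apply (rule pm_union[OF m12 pm_single[OF ay]])
        subgoal using XA by auto
        subgoal using nc[OF s1'(1) XI2] nc[OF say(1) s2(1)] by blast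
        done
      have "(X \<union> RA) \<union> {a,y} = SA" unfolding SA_def by auto
      with m have mA: "pm SA (M1 \<union> M2 \<union> {{a,y}})" by simp
      have mB0: "pm (X \<union> RB) (M1' \<union> M2')"
        by (rule pm_union[OF q(3) q(5) XA(2)]) (use nc[OF s1(2) s2(2)] in blast)
      then have mB: "pm SB (M1' \<union> M2')" unfolding SB_def .
      have ayB: "{a,y} \<notin> M1' \<union> M2'" using pm_sub[OF mB, of "{a,y}"] XA(8) by blast
      have sX1: "\<forall>e\<in>M1. e \<subseteq> X" using pm_sub[OF q(2)] by blast
      have sX1': "\<forall>e\<in>M1'. e \<subseteq> X" using pm_sub[OF q(3)] by blast
      have nX2: "\<forall>e\<in>M2. \<not> e \<subseteq> X" using disj_edges[OF q(4)] XA(1) by blast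
      have nX2': "\<forall>e\<in>M2'. \<not> e \<subseteq> X" using disj_edges[OF q(5)] XA(2) by blast
      have i1: "M1 \<inter> M1' = {}" "M2 \<inter> M2' = {}" using q(6) q(7) unfolding disjoint_compatible_def by blast+
      have dj: "(M1 \<union> M2 \<union> {{a,y}}) \<inter> (M1' \<union> M2') = {}"
      proof -
        { fix e assume e1: "e \<in> M1 \<union> M2 \<union> {{a,y}}" and e2: "e \<in> M1' \<union> M2'"
          have False
          proof (cases "e \<in> M1")
            case True then have "e \<subseteq> X" using sX1 by blast
            then have "e \<notin> M2'" using nX2' by blast
            then have "e \<in> M1'" using e2 by blast
            then show False using i1(1) True by blast
          next
            case F1: False
            show False
            proof (cases "e \<in> M2")
              case True then have "\<not> e \<subseteq> X" using nX2 by blast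
              then have "e \<notin> M1'" using sX1' by blast
              then have "e \<in> M2'" using e2 by blast
              then show False using i1(2) True by blast
            next
              case False
              then have "e = {a,y}" using e1 F1 by blast
              then show False using ayB e2 by blast
            qed
          qed }
        then show ?thesis by blast
      qed
      have c1: "\<forall>e\<in>M1. \<forall>f\<in>M1'. \<not> crosses e f" "\<forall>e\<in>M2. \<forall>f\<in>M2'. \<not> crosses e f"
        using q(6) q(7) unfolding disjoint_compatible_def by blast+
      have ncr: "\<forall>e\<in>M1 \<union> M2 \<union> {{a,y}}. \<forall>f\<in>M1' \<union> M2'. \<not> crosses e f"
      proof (intro ballI)
        fix e f assume e1: "e \<in> M1 \<union> M2 \<union> {{a,y}}" and f1: "f \<in> M1' \<union> M2'"
        show "\<not> crosses e f"
        proof (cases "f \<in> M1'")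
          case True
          show ?thesis
          proof (cases "e \<in> M1")
            case True2: True
            then show ?thesis using c1(1) True by blast
          next
            case False
            then have "e \<in> M2 \<or> e = {a,y}" using e1 by blast
            then show ?thesis
            proof
              assume "e \<in> M2" then show ?thesis using nc[OF s1(2)[OF True] s2(1)] by blast
            next
              assume "e = {a,y}" then show ?thesis using nc[OF s1'(2)[OF True] XI2] by blast
            qed
          qed
        next
          case False
          then have fM: "f \<in> M2'" using f1 by blast
          show ?thesis
          proof (cases "e \<in> M1")
            case True2: True
            then show ?thesis using nc[OF s1(1)[OF True2] s2(2)[OF fM]] by blast
          next
            case F2: False
            then have "e \<in> M2 \<or> e = {a,y}" using e1 by blast
            then show ?thesis
            proof
              assume "e \<in> M2" then show ?thesis using c1(2) fM by blast
            next
              assume "e = {a,y}" then show ?thesis using nc[OF say(1) s2(2)[OF fM]] by blast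
            qed
          qed
        qed
      qed
      show "r \<in> Fib" unfolding q(1) C_def case_prod_conv Fib_def mem_Collect_eq fst_conv PP_iff disjoint_compatible_def
        using mA mB dj ncr by blast
    qed
  qed
  then have "card Fib = card (PP X X \<times> PP RA RB)" by (rule bij_betw_same_card)
  then show ?thesis unfolding Fib_def SA_def SB_def X_def cnt_def by (simp add: card_cartesian_product)
qed

lemma nc_sep: "e \<subseteq> {..k} \<Longrightarrow> f \<subseteq> {k..} \<Longrightarrow> \<not> crosses e f \<and> \<not> crosses f e"
proof -
  assume a: "e \<subseteq> {..k}" "f \<subseteq> {k..}"
  have "e \<subseteq> {0..k}" using a(1) by auto
  moreover have "f \<inter> {0<..<k} = {}" using a(2) by auto
  ultimately show ?thesis by (rule nc)
qed

lemma neq_reg: "e \<subseteq> R \<Longrightarrow> f \<subseteq> R' \<Longrightarrow> R \<inter> R' = {} \<Longrightarrow> e \<noteq> {} \<Longrightarrow> e \<noteq> f"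
  by blast

lemma dc_union: "disjoint_compatible A A' \<Longrightarrow> disjoint_compatible B B' \<Longrightarrow>
   (\<forall>e\<in>A. \<forall>f\<in>B'. e \<noteq> f \<and> \<not> crosses e f) \<Longrightarrow> (\<forall>e\<in>B. \<forall>f\<in>A'. e \<noteq> f \<and> \<not> crosses e f) \<Longrightarrow>
   disjoint_compatible (A \<union> B) (A' \<union> B')"
  unfolding disjoint_compatible_def by blast

lemma dc_single: "e \<noteq> f \<Longrightarrow> \<not> crosses e f \<Longrightarrow> disjoint_compatible {e} {f}"
  unfolding disjoint_compatible_def by blast

lemma filt4_1: "(\<forall>e\<in>A. P e) \<Longrightarrow> (\<forall>e\<in>B. \<not> P e) \<Longrightarrow> (\<forall>e\<in>C. \<not> P e) \<Longrightarrow> (\<forall>e\<in>E. \<not> P e) \<Longrightarrow> {e\<in>A \<union> B \<union> C \<union> E. P e} = A"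
  by blast
lemma filt4_2: "(\<forall>e\<in>A. \<not> P e) \<Longrightarrow> (\<forall>e\<in>B. P e) \<Longrightarrow> (\<forall>e\<in>C. \<not> P e) \<Longrightarrow> (\<forall>e\<in>E. \<not> P e) \<Longrightarrow> {e\<in>A \<union> B \<union> C \<union> E. P e} = B"
  by blast
lemma filt4_3: "(\<forall>e\<in>A. \<not> P e) \<Longrightarrow> (\<forall>e\<in>B. \<not> P e) \<Longrightarrow> (\<forall>e\<in>C. P e) \<Longrightarrow> (\<forall>e\<in>E. \<not> P e) \<Longrightarrow> {e\<in>A \<union> B \<union> C \<union> E. P e} = C"
  by blast

lemma Tcomp:
  fixes n j1 j2 :: nat
  assumes j: "0 < j1" "j1 < j2" "j2 \<le> n"
    and p1: "pm {0<..<j1} M1" "pm {0<..<j1} M1'" "disjoint_compatible M1 M1'"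
    and p2: "pm {j1<..j2} M2" "pm {j1..<j2} M2'" "disjoint_compatible M2 M2'"
    and p3: "pm {j2<..n} M3" "pm {j2<..n} M3'" "disjoint_compatible M3 M3'"
  shows "pm {0..n} (M1 \<union> M2 \<union> M3 \<union> {{0,j1}}) \<and> pm {0..n} (M1' \<union> M2' \<union> M3' \<union> {{0,j2}}) \<and>
         disjoint_compatible (M1 \<union> M2 \<union> M3 \<union> {{0,j1}}) (M1' \<union> M2' \<union> M3' \<union> {{0,j2}})"
proof -
  have a1: "\<And>e. e \<in> M1 \<Longrightarrow> e \<subseteq> {0<..<j1}" using pm_sub[OF p1(1)] by blast
  have a1': "\<And>e. e \<in> M1' \<Longrightarrow> e \<subseteq> {0<..<j1}" using pm_sub[OF p1(2)] by blast
  have a2: "\<And>e. e \<in> M2 \<Longrightarrow> e \<subseteq> {j1<..j2}" using pm_sub[OF p2(1)] by blast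
  have a2': "\<And>e. e \<in> M2' \<Longrightarrow> e \<subseteq> {j1..<j2}" using pm_sub[OF p2(2)] by blast
  have a3: "\<And>e. e \<in> M3 \<Longrightarrow> e \<subseteq> {j2<..n}" using pm_sub[OF p3(1)] by blast
  have a3': "\<And>e. e \<in> M3' \<Longrightarrow> e \<subseteq> {j2<..n}" using pm_sub[OF p3(2)] by blast
  have ne: "\<And>e. e \<in> M1 \<union> M2 \<union> M3 \<union> M1' \<union> M2' \<union> M3' \<Longrightarrow> e \<noteq> {}"
    using pm_ne[OF p1(1)] pm_ne[OF p1(2)] pm_ne[OF p2(1)] pm_ne[OF p2(2)] pm_ne[OF p3(1)] pm_ne[OF p3(2)] by blast
  have i1: "{0<..<j1} \<subseteq> {..j1}" "{0<..<j1} \<subseteq> {..j2}" "{0<..<j1} \<subseteq> {0<..<j2}" using j by auto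
  have i2: "{j1<..j2} \<subseteq> {j1..}" "{j1<..j2} \<subseteq> {..j2}" "{j1<..j2} \<subseteq> {j1..j2}" by auto
  have i2': "{j1..<j2} \<subseteq> {j1..}" "{j1..<j2} \<subseteq> {..j2}" "{j1..<j2} \<subseteq> {0<..<j2}" using j by auto
  have i3: "{j2<..n} \<subseteq> {j2..}" "{j2<..n} \<subseteq> {j1..}" using j by auto
  have o1: "{0,j1} \<subseteq> {..j1}" "{0,j1} \<subseteq> {0..j1}" "{0,j1} \<inter> {0<..<j1} = {}" by auto
  have o2: "{0,j2} \<subseteq> {..j2}" "{0,j2} \<subseteq> {0..j2}" "{0,j2} \<inter> {0<..<j2} = {}" "{0,j2} \<inter> {j1<..<j2} = {}" by auto
  have ncin: "\<And>e l h f. e \<subseteq> {l<..<h} \<Longrightarrow> f \<inter> {l<..<h} = {} \<Longrightarrow> \<not> crosses e f \<and> \<not> crosses f e"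
  proof -
    fix e l h f assume a: "e \<subseteq> {l<..<(h::nat)}" "f \<inter> {l<..<h} = {}"
    have "e \<subseteq> {l..h}" using a(1) by auto
    then show "\<not> crosses e f \<and> \<not> crosses f e" using nc[OF _ a(2)] by blast
  qed
  have m12: "pm ({0<..<j1} \<union> {j1<..j2}) (M1 \<union> M2)"
    apply (rule pm_union[OF p1(1) p2(1)])
    subgoal using j by auto
    subgoal using nc_sep[OF subset_trans[OF a1 i1(1)] subset_trans[OF a2 i2(1)]] by blast
    done
  have m123: "pm (({0<..<j1} \<union> {j1<..j2}) \<union> {j2<..n}) ((M1 \<union> M2) \<union> M3)"
    apply (rule pm_union[OF m12 p3(1)])
    subgoal using j by auto
    subgoal using nc_sep[OF subset_trans[OF a1 i1(2)] subset_trans[OF a3 i3(1)]]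
       nc_sep[OF subset_trans[OF a2 i2(2)] subset_trans[OF a3 i3(1)]] by blast
    done
  have mA: "pm ((({0<..<j1} \<union> {j1<..j2}) \<union> {j2<..n}) \<union> {0,j1}) (((M1 \<union> M2) \<union> M3) \<union> {{0,j1}})"
    apply (rule pm_union[OF m123 pm_single[OF j(1)]])
    subgoal using j by auto
    subgoal premises pr
    proof (intro ballI)
      fix e f assume e: "e \<in> M1 \<union> M2 \<union> M3" and f: "f \<in> {{0,j1}}"
      then have f': "f = {0,j1}" by blast
      show "\<not> crosses e f"
      proof (cases "e \<in> M1")
        case True then show ?thesis using ncin[OF a1[OF True] o1(3)] f' by blast
      next
        case False
        then have "e \<subseteq> {j1..}" using e a2 a3 i2(1) i3(2) by blast
        then show ?thesis using nc_sep[OF o1(1), of e] f' by blast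
      qed
    qed
    done
  have sA: "(({0<..<j1} \<union> {j1<..j2}) \<union> {j2<..n}) \<union> {0,j1} = {0..n}" using j by auto
  have m12': "pm ({0<..<j1} \<union> {j1..<j2}) (M1' \<union> M2')"
    apply (rule pm_union[OF p1(2) p2(2)])
    subgoal using j by auto
    subgoal using nc_sep[OF subset_trans[OF a1' i1(1)] subset_trans[OF a2' i2'(1)]] by blast
    done
  have m123': "pm (({0<..<j1} \<union> {j1..<j2}) \<union> {j2<..n}) ((M1' \<union> M2') \<union> M3')"
    apply (rule pm_union[OF m12' p3(2)])
    subgoal using j by auto
    subgoal using nc_sep[OF subset_trans[OF a1' i1(2)] subset_trans[OF a3' i3(1)]]
       nc_sep[OF subset_trans[OF a2' i2'(2)] subset_trans[OF a3' i3(1)]] by blast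
    done
  have mB: "pm ((({0<..<j1} \<union> {j1..<j2}) \<union> {j2<..n}) \<union> {0,j2}) (((M1' \<union> M2') \<union> M3') \<union> {{0,j2}})"
    apply (rule pm_union[OF m123' pm_single[OF order.strict_trans[OF j(1) j(2)]]])
    subgoal using j by auto
    subgoal premises pr
    proof (intro ballI)
      fix e f assume e: "e \<in> M1' \<union> M2' \<union> M3'" and f: "f \<in> {{0,j2}}"
      then have f': "f = {0,j2}" by blast
      show "\<not> crosses e f"
      proof (cases "e \<in> M3'")
        case True then show ?thesis using nc_sep[OF o2(1) subset_trans[OF a3'[OF True] i3(1)]] f' by blast
      next
        case False
        then have "e \<subseteq> {0<..<j2}" using e a1' a2' i1(3) i2'(3) by blast
        then show ?thesis using ncin[OF _ o2(3), of e] f' by blast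
      qed
    qed
    done
  have sB: "(({0<..<j1} \<union> {j1..<j2}) \<union> {j2<..n}) \<union> {0,j2} = {0..n}" using j by auto
  have d12: "disjoint_compatible (M1 \<union> M2) (M1' \<union> M2')"
  proof (rule dc_union[OF p1(3) p2(3)])
    show "\<forall>e\<in>M1. \<forall>f\<in>M2'. e \<noteq> f \<and> \<not> crosses e f"
    proof (intro ballI conjI)
      fix e f assume e: "e \<in> M1" and f: "f \<in> M2'"
      show "e \<noteq> f" by (rule neq_reg[OF a1[OF e] a2'[OF f] _ ne]) (use e in auto)
      show "\<not> crosses e f" using nc_sep[OF subset_trans[OF a1[OF e] i1(1)] subset_trans[OF a2'[OF f] i2'(1)]] by blast
    qed
    show "\<forall>e\<in>M2. \<forall>f\<in>M1'. e \<noteq> f \<and> \<not> crosses e f"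
    proof (intro ballI conjI)
      fix e f assume e: "e \<in> M2" and f: "f \<in> M1'"
      show "e \<noteq> f" by (rule neq_reg[OF a2[OF e] a1'[OF f] _ ne]) (use e in auto)
      show "\<not> crosses e f" using nc_sep[OF subset_trans[OF a1'[OF f] i1(1)] subset_trans[OF a2[OF e] i2(1)]] by blast
    qed
  qed
  have d123: "disjoint_compatible ((M1 \<union> M2) \<union> M3) ((M1' \<union> M2') \<union> M3')"
  proof (rule dc_union[OF d12 p3(3)])
    show "\<forall>e\<in>M1 \<union> M2. \<forall>f\<in>M3'. e \<noteq> f \<and> \<not> crosses e f"
    proof (intro ballI conjI)
      fix e f assume e: "e \<in> M1 \<union> M2" and f: "f \<in> M3'"
      have es: "e \<subseteq> {..j2}" using e a1 a2 i1(2) i2(2) by blast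
      have er: "e \<subseteq> {..j2}" using es .
      show "e \<noteq> f" by (rule neq_reg[OF es a3'[OF f] _ ne]) (use e in auto)
      show "\<not> crosses e f" using nc_sep[OF es subset_trans[OF a3'[OF f] i3(1)]] by blast
    qed
    show "\<forall>e\<in>M3. \<forall>f\<in>M1' \<union> M2'. e \<noteq> f \<and> \<not> crosses e f"
    proof (intro ballI conjI)
      fix e f assume e: "e \<in> M3" and f: "f \<in> M1' \<union> M2'"
      have fs: "f \<subseteq> {..j2}" using f a1' a2' i1(2) i2'(2) by blast
      show "e \<noteq> f" by (rule neq_reg[OF a3[OF e] fs _ ne]) (use e in auto)
      show "\<not> crosses e f" using nc_sep[OF fs subset_trans[OF a3[OF e] i3(1)]] by blast
    qed
  qed
  have dA: "disjoint_compatible (((M1 \<union> M2) \<union> M3) \<union> {{0,j1}}) (((M1' \<union> M2') \<union> M3') \<union> {{0,j2}})"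
  proof (rule dc_union[OF d123 dc_single])
    show "{0,j1} \<noteq> {0,j2}" using j by (auto simp: doubleton_eq_iff)
    show "\<not> crosses {0,j1} {0,j2}" using nc[OF o1(2), of "{0,j2}"] j by auto
    show "\<forall>e\<in>M1 \<union> M2 \<union> M3. \<forall>f\<in>{{0,j2}}. e \<noteq> f \<and> \<not> crosses e f"
    proof (intro ballI conjI)
      fix e f assume e: "e \<in> M1 \<union> M2 \<union> M3" and f: "f \<in> {{0,j2}}"
      have f': "f = {0,j2}" using f by blast
      have "0 \<notin> e" using e a1 a2 a3 by fastforce
      then show "e \<noteq> f" using f' by blast
      show "\<not> crosses e f"
      proof (cases "e \<in> M3")
        case True then show ?thesis using nc_sep[OF o2(1) subset_trans[OF a3[OF True] i3(1)]] f' by blast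
      next
        case False
        then have "e \<in> M1 \<or> e \<in> M2" using e by blast
        then show ?thesis
        proof
          assume "e \<in> M1" then show ?thesis using ncin[OF subset_trans[OF a1 i1(3)] o2(3)] f' by blast
        next
          assume "e \<in> M2" then show ?thesis using nc[OF subset_trans[OF a2 i2(3)] o2(4)] f' by blast
        qed
      qed
    qed
    show "\<forall>e\<in>{{0,j1}}. \<forall>f\<in>M1' \<union> M2' \<union> M3'. e \<noteq> f \<and> \<not> crosses e f"
    proof (intro ballI conjI)
      fix e f assume f: "f \<in> M1' \<union> M2' \<union> M3'" and e: "e \<in> {{0,j1}}"
      have e': "e = {0,j1}" using e by blast
      have "0 \<notin> f" using f a1' a2' a3' j by fastforce
      then show "e \<noteq> f" using e' by blast
      show "\<not> crosses e f"
      proof (cases "f \<in> M1'")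
        case True then show ?thesis using ncin[OF a1'[OF True] o1(3)] e' by blast
      next
        case False
        then have "f \<subseteq> {j1..}" using f a2' a3' i2'(1) i3(2) by blast
        then show ?thesis using nc_sep[OF o1(1), of f] e' by blast
      qed
    qed
  qed
  show ?thesis using mA mB dA sA sB by simp
qed

lemma Tdecomp:
  fixes n j1 j2 :: nat
  assumes j: "0 < j1" "j1 < j2" "j2 \<le> n"
    and pM: "pm {0..n} M" and pM': "pm {0..n} M'" and dc: "disjoint_compatible M M'"
    and h1: "{0,j1} \<in> M" and h2: "{0,j2} \<in> M'"
  shows "pm {0<..<j1} {e\<in>M. e \<subseteq> {0<..<j1}} \<and> pm {0<..<j1} {e\<in>M'. e \<subseteq> {0<..<j1}} \<and>
    pm {j1<..j2} {e\<in>M. \<not> e \<subseteq> {0<..<j1} \<and> \<not> e \<subseteq> {j2<..n} \<and> \<not> e \<subseteq> {0,j1}} \<and>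
    pm {j1..<j2} {e\<in>M'. \<not> e \<subseteq> {0<..<j1} \<and> \<not> e \<subseteq> {j2<..n} \<and> \<not> e \<subseteq> {0,j2}} \<and>
    pm {j2<..n} {e\<in>M. e \<subseteq> {j2<..n}} \<and> pm {j2<..n} {e\<in>M'. e \<subseteq> {j2<..n}}"
proof -
  define X where "X = {0<..<j1}"
  define Y where "Y = {j2<..n}"
  have fX: "finite X" "finite Y" unfolding X_def Y_def by simp_all
  have XS: "X \<subseteq> {0..n}" "Y \<subseteq> {0..n}" unfolding X_def Y_def using j by auto
  have j1X: "j1 \<notin> X" "j2 \<notin> Y" unfolding X_def Y_def by auto
  have u0: "\<And>e. e \<in> M \<Longrightarrow> 0 \<in> e \<Longrightarrow> e = {0,j1}" using pm_uniq[OF pM _ h1] by blast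
  have u1: "\<And>e. e \<in> M \<Longrightarrow> j1 \<in> e \<Longrightarrow> e = {0,j1}" using pm_uniq[OF pM _ h1] by blast
  have u0': "\<And>e. e \<in> M' \<Longrightarrow> 0 \<in> e \<Longrightarrow> e = {0,j2}" using pm_uniq[OF pM' _ h2] by blast
  have u2': "\<And>e. e \<in> M' \<Longrightarrow> j2 \<in> e \<Longrightarrow> e = {0,j2}" using pm_uniq[OF pM' _ h2] by blast
  have dcn: "\<And>e f. e \<in> M \<Longrightarrow> f \<in> M' \<Longrightarrow> \<not> crosses e f \<and> \<not> crosses f e"
    using dc crosses_sym unfolding disjoint_compatible_def by blast
  have closXM: "\<forall>e\<in>M. e \<inter> X \<noteq> {} \<longrightarrow> e \<subseteq> X"
  proof (intro ballI impI)
    fix e assume e: "e \<in> M" "e \<inter> X \<noteq> {}"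
    then obtain x where x: "x \<in> e" "x \<in> X" by blast
    then have x': "0 < x" "x < j1" unfolding X_def by auto
    obtain z where z: "e = {x,z}" "z \<in> {0..n}" "z \<noteq> x" using edge_other[OF pM e(1) x(1)] by blast
    have "z \<noteq> 0"
    proof
      assume "z = 0" then have "0 \<in> e" using z(1) by blast
      then have "e = {0,j1}" using u0[OF e(1)] by blast
      then have "x \<in> {0,j1}" using x(1) by blast
      then show False using x' j by auto
    qed
    moreover have "z \<noteq> j1"
    proof
      assume "z = j1" then have "j1 \<in> e" using z(1) by blast
      then have "e = {0,j1}" using u1[OF e(1)] by blast
      then have "x \<in> {0,j1}" using x(1) by blast
      then show False using x' j by auto
    qed
    moreover have "\<not> j1 < z"
    proof
      assume "j1 < z"
      then have "crosses {0,j1} {x,z}" using x' by (intro crossesI) auto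
      then show False using pm_nc[OF pM h1 e(1)] z(1) by simp
    qed
    ultimately have "z \<in> X" unfolding X_def by auto
    then show "e \<subseteq> X" using z(1) x(2) by blast
  qed
  have pX: "pm X {e\<in>M. e \<subseteq> X}" using pm_restrict[OF pM XS(1) closXM] .
  have evX: "even (card X)" using pm_even[OF fX(1) pX] .
  have closXM'0: "\<forall>e\<in>M'. e \<inter> X \<noteq> {} \<longrightarrow> e \<subseteq> insert j1 X"
  proof (intro ballI impI)
    fix e assume e: "e \<in> M'" "e \<inter> X \<noteq> {}"
    then obtain x where x: "x \<in> e" "x \<in> X" by blast
    then have x': "0 < x" "x < j1" unfolding X_def by auto
    obtain z where z: "e = {x,z}" "z \<in> {0..n}" "z \<noteq> x" using edge_other[OF pM' e(1) x(1)] by blast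
    have "z \<noteq> 0"
    proof
      assume "z = 0" then have "0 \<in> e" using z(1) by blast
      then have "e = {0,j2}" using u0'[OF e(1)] by blast
      then have "x \<in> {0,j2}" using x(1) by blast
      then show False using x' j by auto
    qed
    moreover have "z \<noteq> j2"
    proof
      assume "z = j2" then have "j2 \<in> e" using z(1) by blast
      then have "e = {0,j2}" using u2'[OF e(1)] by blast
      then have "x \<in> {0,j2}" using x(1) by blast
      then show False using x' j by auto
    qed
    moreover have "\<not> j2 < z"
    proof
      assume "j2 < z"
      then have "crosses {0,j2} {x,z}" using x' j by (intro crossesI) auto
      then show False using pm_nc[OF pM' h2 e(1)] z(1) by simp
    qed
    moreover have "\<not> (j1 < z \<and> z < j2)"
    proof
      assume "j1 < z \<and> z < j2"
      then have "crosses {0,j1} {x,z}" using x' by (intro crossesI) auto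
      then show False using dcn[OF h1 e(1)] z(1) by simp
    qed
    ultimately have "z \<in> insert j1 X" unfolding X_def by auto
    then show "e \<subseteq> insert j1 X" using z(1) x(2) by blast
  qed
  have closXM': "\<forall>e\<in>M'. e \<inter> X \<noteq> {} \<longrightarrow> e \<subseteq> X"
    using no_escape[OF pM' fX(1) XS(1) j1X(1) closXM'0 evX] .
  have pX': "pm X {e\<in>M'. e \<subseteq> X}" using pm_restrict[OF pM' XS(1) closXM'] .
  have closYM': "\<forall>e\<in>M'. e \<inter> Y \<noteq> {} \<longrightarrow> e \<subseteq> Y"
  proof (intro ballI impI)
    fix e assume e: "e \<in> M'" "e \<inter> Y \<noteq> {}"
    then obtain x where x: "x \<in> e" "x \<in> Y" by blast
    then have x': "j2 < x" "x \<le> n" unfolding Y_def by auto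
    obtain z where z: "e = {x,z}" "z \<in> {0..n}" "z \<noteq> x" using edge_other[OF pM' e(1) x(1)] by blast
    have "z \<noteq> 0"
    proof
      assume "z = 0" then have "0 \<in> e" using z(1) by blast
      then have "e = {0,j2}" using u0'[OF e(1)] by blast
      then have "x \<in> {0,j2}" using x(1) by blast
      then show False using x' j by auto
    qed
    moreover have "z \<noteq> j2"
    proof
      assume "z = j2" then have "j2 \<in> e" using z(1) by blast
      then have "e = {0,j2}" using u2'[OF e(1)] by blast
      then have "x \<in> {0,j2}" using x(1) by blast
      then show False using x' j by auto
    qed
    moreover have "z \<notin> X"
    proof
      assume zX: "z \<in> X"
      have "z \<in> e" using z(1) by blast
      then have "e \<inter> X \<noteq> {}" using zX by blast
      then have "e \<subseteq> X" using closXM' e(1) by blast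
      then have "x \<in> X" using x(1) by blast
      then show False using x' j unfolding X_def by auto
    qed
    moreover have "\<not> (j1 \<le> z \<and> z < j2)"
    proof
      assume a: "j1 \<le> z \<and> z < j2"
      then have "crosses {0,j2} {z,x}" using x' j by (intro crossesI) auto
      then show False using pm_nc[OF pM' h2 e(1)] z(1) by (simp add: insert_commute)
    qed
    ultimately have "z \<in> Y" using z(2) unfolding X_def Y_def by auto
    then show "e \<subseteq> Y" using z(1) x(2) by blast
  qed
  have pY': "pm Y {e\<in>M'. e \<subseteq> Y}" using pm_restrict[OF pM' XS(2) closYM'] .
  have evY: "even (card Y)" using pm_even[OF fX(2) pY'] .
  have closYM0: "\<forall>e\<in>M. e \<inter> Y \<noteq> {} \<longrightarrow> e \<subseteq> insert j2 Y"
  proof (intro ballI impI)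
    fix e assume e: "e \<in> M" "e \<inter> Y \<noteq> {}"
    then obtain x where x: "x \<in> e" "x \<in> Y" by blast
    then have x': "j2 < x" "x \<le> n" unfolding Y_def by auto
    obtain z where z: "e = {x,z}" "z \<in> {0..n}" "z \<noteq> x" using edge_other[OF pM e(1) x(1)] by blast
    have "z \<noteq> 0"
    proof
      assume "z = 0" then have "0 \<in> e" using z(1) by blast
      then have "e = {0,j1}" using u0[OF e(1)] by blast
      then have "x \<in> {0,j1}" using x(1) by blast
      then show False using x' j by auto
    qed
    moreover have "z \<noteq> j1"
    proof
      assume "z = j1" then have "j1 \<in> e" using z(1) by blast
      then have "e = {0,j1}" using u1[OF e(1)] by blast
      then have "x \<in> {0,j1}" using x(1) by blast
      then show False using x' j by auto
    qed
    moreover have "z \<notin> X"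
    proof
      assume zX: "z \<in> X"
      have "z \<in> e" using z(1) by blast
      then have "e \<inter> X \<noteq> {}" using zX by blast
      then have "e \<subseteq> X" using closXM e(1) by blast
      then have "x \<in> X" using x(1) by blast
      then show False using x' j unfolding X_def by auto
    qed
    moreover have "\<not> (j1 < z \<and> z < j2)"
    proof
      assume a: "j1 < z \<and> z < j2"
      then have "crosses {0,j2} {z,x}" using x' j by (intro crossesI) auto
      then show False using dcn[OF e(1) h2] z(1) by (simp add: insert_commute)
    qed
    ultimately have "z \<in> insert j2 Y" using z(2) unfolding X_def Y_def by auto
    then show "e \<subseteq> insert j2 Y" using z(1) x(2) by blast
  qed
  have closYM: "\<forall>e\<in>M. e \<inter> Y \<noteq> {} \<longrightarrow> e \<subseteq> Y"
    using no_escape[OF pM fX(2) XS(2) j1X(2) closYM0 evY] .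
  have pY: "pm Y {e\<in>M. e \<subseteq> Y}" using pm_restrict[OF pM XS(2) closYM] .
  have q1: "pm ({0..n} - X) {e\<in>M. \<not> e \<subseteq> X}" using pm_compl[OF pM closXM] .
  have q2: "pm ({0..n} - X - Y) {e\<in>{e\<in>M. \<not> e \<subseteq> X}. \<not> e \<subseteq> Y}"
    by (rule pm_compl[OF q1]) (use closYM in blast)
  have q3: "pm ({0..n} - X - Y - {0,j1}) {e\<in>{e\<in>{e\<in>M. \<not> e \<subseteq> X}. \<not> e \<subseteq> Y}. \<not> e \<subseteq> {0,j1}}"
    by (rule pm_compl[OF q2]) (use u0 u1 in blast)
  have st1: "{0..n} - X - Y - {0,j1} = {j1<..j2}" unfolding X_def Y_def using j by auto
  have st2: "{e\<in>{e\<in>{e\<in>M. \<not> e \<subseteq> X}. \<not> e \<subseteq> Y}. \<not> e \<subseteq> {0,j1}} = {e\<in>M. \<not> e \<subseteq> X \<and> \<not> e \<subseteq> Y \<and> \<not> e \<subseteq> {0,j1}}"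
    by blast
  have pMid: "pm {j1<..j2} {e\<in>M. \<not> e \<subseteq> X \<and> \<not> e \<subseteq> Y \<and> \<not> e \<subseteq> {0,j1}}" using q3 unfolding st1 st2 .
  have r1: "pm ({0..n} - X) {e\<in>M'. \<not> e \<subseteq> X}" using pm_compl[OF pM' closXM'] .
  have r2: "pm ({0..n} - X - Y) {e\<in>{e\<in>M'. \<not> e \<subseteq> X}. \<not> e \<subseteq> Y}"
    by (rule pm_compl[OF r1]) (use closYM' in blast)
  have r3: "pm ({0..n} - X - Y - {0,j2}) {e\<in>{e\<in>{e\<in>M'. \<not> e \<subseteq> X}. \<not> e \<subseteq> Y}. \<not> e \<subseteq> {0,j2}}"
    by (rule pm_compl[OF r2]) (use u0' u2' in blast)
  have rt1: "{0..n} - X - Y - {0,j2} = {j1..<j2}" unfolding X_def Y_def using j by auto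
  have rt2: "{e\<in>{e\<in>{e\<in>M'. \<not> e \<subseteq> X}. \<not> e \<subseteq> Y}. \<not> e \<subseteq> {0,j2}} = {e\<in>M'. \<not> e \<subseteq> X \<and> \<not> e \<subseteq> Y \<and> \<not> e \<subseteq> {0,j2}}"
    by blast
  have pMid': "pm {j1..<j2} {e\<in>M'. \<not> e \<subseteq> X \<and> \<not> e \<subseteq> Y \<and> \<not> e \<subseteq> {0,j2}}" using r3 unfolding rt1 rt2 .
  show ?thesis using pX pX' pMid pMid' pY pY' unfolding X_def Y_def by blast
qed

lemma filtM: "{e\<in>M. e \<subseteq> X} \<union> {e\<in>M. \<not> e \<subseteq> X \<and> \<not> e \<subseteq> Y \<and> \<not> e \<subseteq> E} \<union> {e\<in>M. e \<subseteq> Y} \<union> {E} = M"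
  if "E \<in> M" "\<And>e. e \<in> M \<Longrightarrow> e \<subseteq> E \<Longrightarrow> e = E"
  using that by blast

lemma Tfib:
  fixes n j1 j2 :: nat
  assumes j: "0 < j1" "j1 < j2" "j2 \<le> n"
  shows "card {p \<in> PP {0..n} {0..n}. {0,j1} \<in> fst p \<and> {0,j2} \<in> snd p}
       = cnt {0<..<j1} {0<..<j1} * (cnt {j1<..j2} {j1..<j2} * cnt {j2<..n} {j2<..n})"
proof -
  define X where "X = {0<..<j1}"
  define Y where "Y = {j2<..n}"
  define Fib where "Fib = {p \<in> PP {0..n} {0..n}. {0,j1} \<in> fst p \<and> {0,j2} \<in> snd p}"
  define D where "D = (\<lambda>(M::nat set set, M'::nat set set). (({e\<in>M. e \<subseteq> X}, {e\<in>M'. e \<subseteq> X}),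
     (({e\<in>M. \<not> e \<subseteq> X \<and> \<not> e \<subseteq> Y \<and> \<not> e \<subseteq> {0,j1}}, {e\<in>M'. \<not> e \<subseteq> X \<and> \<not> e \<subseteq> Y \<and> \<not> e \<subseteq> {0,j2}}),
      ({e\<in>M. e \<subseteq> Y}, {e\<in>M'. e \<subseteq> Y}))))"
  define C where "C = (\<lambda>((M1::nat set set, M1'::nat set set), ((M2::nat set set, M2'::nat set set), (M3::nat set set, M3'::nat set set))).
     (M1 \<union> M2 \<union> M3 \<union> {{0,j1}}, M1' \<union> M2' \<union> M3' \<union> {{0,j2}}))"
  have reg: "X \<inter> {j1<..j2} = {}" "Y \<inter> {j1<..j2} = {}" "{0,j1} \<inter> {j1<..j2} = {}" "Y \<inter> X = {}" "X \<inter> Y = {}"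
     "{0,j1} \<inter> X = {}" "{0,j1} \<inter> Y = {}"
     "X \<inter> {j1..<j2} = {}" "Y \<inter> {j1..<j2} = {}" "{0,j2} \<inter> {j1..<j2} = {}" "{0,j2} \<inter> X = {}" "{0,j2} \<inter> Y = {}"
    unfolding X_def Y_def using j by auto
  have nz: "\<not> {0,j1} \<subseteq> X" "\<not> {0,j1} \<subseteq> Y" "\<not> {0,j2} \<subseteq> X" "\<not> {0,j2} \<subseteq> Y" unfolding X_def Y_def by auto
  have "bij_betw D Fib (PP X X \<times> (PP {j1<..j2} {j1..<j2} \<times> PP Y Y))"
  proof (rule bij_betw_byWitness[where f'=C])
    show "\<forall>p\<in>Fib. C (D p) = p"
    proof
      fix p assume pF: "p \<in> Fib"
      obtain M M' where p1: "p = (M,M')" by (cases p) auto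
      have p: "pm {0..n} M" "pm {0..n} M'" "{0,j1} \<in> M" "{0,j2} \<in> M'"
        using pF unfolding p1 Fib_def mem_Collect_eq PP_iff fst_conv snd_conv by simp_all
      have eM: "{e\<in>M. e \<subseteq> X} \<union> {e\<in>M. \<not> e \<subseteq> X \<and> \<not> e \<subseteq> Y \<and> \<not> e \<subseteq> {0,j1}} \<union> {e\<in>M. e \<subseteq> Y} \<union> {{0,j1}} = M"
        by (rule filtM[OF p(3)]) (use edge_sub2[OF p(1)] in blast)
      have eM': "{e\<in>M'. e \<subseteq> X} \<union> {e\<in>M'. \<not> e \<subseteq> X \<and> \<not> e \<subseteq> Y \<and> \<not> e \<subseteq> {0,j2}} \<union> {e\<in>M'. e \<subseteq> Y} \<union> {{0,j2}} = M'"
        by (rule filtM[OF p(4)]) (use edge_sub2[OF p(2)] in blast)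
      have "C (D (M,M')) = ({e\<in>M. e \<subseteq> X} \<union> {e\<in>M. \<not> e \<subseteq> X \<and> \<not> e \<subseteq> Y \<and> \<not> e \<subseteq> {0,j1}} \<union> {e\<in>M. e \<subseteq> Y} \<union> {{0,j1}},
          {e\<in>M'. e \<subseteq> X} \<union> {e\<in>M'. \<not> e \<subseteq> X \<and> \<not> e \<subseteq> Y \<and> \<not> e \<subseteq> {0,j2}} \<union> {e\<in>M'. e \<subseteq> Y} \<union> {{0,j2}})"
        unfolding C_def D_def by simp
      also have "\<dots> = (M,M')" by (simp only: eM eM')
      finally show "C (D p) = p" unfolding p1 .
    qed
    show "\<forall>q\<in>PP X X \<times> (PP {j1<..j2} {j1..<j2} \<times> PP Y Y). D (C q) = q"
    proof
      fix q assume q0: "q \<in> PP X X \<times> (PP {j1<..j2} {j1..<j2} \<times> PP Y Y)"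
      obtain M1 M1' M2 M2' M3 M3' where q1: "q = ((M1,M1'),((M2,M2'),(M3,M3')))" by (cases q) auto
      have q: "pm X M1" "pm X M1'" "pm {j1<..j2} M2" "pm {j1..<j2} M2'" "pm Y M3" "pm Y M3'"
        using q0 unfolding q1 mem_Times_iff fst_conv snd_conv PP_iff by simp_all
      have s1: "\<forall>e\<in>M1. e \<subseteq> X" "\<forall>e\<in>M1'. e \<subseteq> X" "\<forall>e\<in>M3. e \<subseteq> Y" "\<forall>e\<in>M3'. e \<subseteq> Y"
        using pm_sub[OF q(1)] pm_sub[OF q(2)] pm_sub[OF q(5)] pm_sub[OF q(6)] by blast+
      have n1: "\<forall>e\<in>M1. \<not> e \<subseteq> Y" "\<forall>e\<in>M1. \<not> e \<subseteq> {0,j1}" "\<forall>e\<in>M1'. \<not> e \<subseteq> Y" "\<forall>e\<in>M1'. \<not> e \<subseteq> {0,j2}"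
        using disj_edges[OF q(1) reg(4)] disj_edges[OF q(1) reg(6)] disj_edges[OF q(2) reg(4)] disj_edges[OF q(2) reg(11)] by blast+
      have n2: "\<forall>e\<in>M2. \<not> e \<subseteq> X" "\<forall>e\<in>M2. \<not> e \<subseteq> Y" "\<forall>e\<in>M2. \<not> e \<subseteq> {0,j1}"
         "\<forall>e\<in>M2'. \<not> e \<subseteq> X" "\<forall>e\<in>M2'. \<not> e \<subseteq> Y" "\<forall>e\<in>M2'. \<not> e \<subseteq> {0,j2}"
        using disj_edges[OF q(3) reg(1)] disj_edges[OF q(3) reg(2)] disj_edges[OF q(3) reg(3)]
          disj_edges[OF q(4) reg(8)] disj_edges[OF q(4) reg(9)] disj_edges[OF q(4) reg(10)] by blast+
      have n3: "\<forall>e\<in>M3. \<not> e \<subseteq> X" "\<forall>e\<in>M3. \<not> e \<subseteq> {0,j1}" "\<forall>e\<in>M3'. \<not> e \<subseteq> X" "\<forall>e\<in>M3'. \<not> e \<subseteq> {0,j2}"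
        using disj_edges[OF q(5) reg(5)] disj_edges[OF q(5) reg(7)] disj_edges[OF q(6) reg(5)] disj_edges[OF q(6) reg(12)] by blast+
      have f1: "{e\<in>M1 \<union> M2 \<union> M3 \<union> {{0,j1}}. e \<subseteq> X} = M1"
        by (rule filt4_1) (use s1 n2 n3 nz in auto)
      have f2: "{e\<in>M1 \<union> M2 \<union> M3 \<union> {{0,j1}}. \<not> e \<subseteq> X \<and> \<not> e \<subseteq> Y \<and> \<not> e \<subseteq> {0,j1}} = M2"
        by (rule filt4_2) (use s1 n2 n3 in auto)
      have f3: "{e\<in>M1 \<union> M2 \<union> M3 \<union> {{0,j1}}. e \<subseteq> Y} = M3"
        by (rule filt4_3) (use s1 n1 n2 nz in auto)
      have f1': "{e\<in>M1' \<union> M2' \<union> M3' \<union> {{0,j2}}. e \<subseteq> X} = M1'"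
        by (rule filt4_1) (use s1 n2 n3 nz in auto)
      have f2': "{e\<in>M1' \<union> M2' \<union> M3' \<union> {{0,j2}}. \<not> e \<subseteq> X \<and> \<not> e \<subseteq> Y \<and> \<not> e \<subseteq> {0,j2}} = M2'"
        by (rule filt4_2) (use s1 n2 n3 in auto)
      have f3': "{e\<in>M1' \<union> M2' \<union> M3' \<union> {{0,j2}}. e \<subseteq> Y} = M3'"
        by (rule filt4_3) (use s1 n1 n2 nz in auto)
      have "D (C q) = (({e\<in>M1 \<union> M2 \<union> M3 \<union> {{0,j1}}. e \<subseteq> X}, {e\<in>M1' \<union> M2' \<union> M3' \<union> {{0,j2}}. e \<subseteq> X}),
         (({e\<in>M1 \<union> M2 \<union> M3 \<union> {{0,j1}}. \<not> e \<subseteq> X \<and> \<not> e \<subseteq> Y \<and> \<not> e \<subseteq> {0,j1}},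
           {e\<in>M1' \<union> M2' \<union> M3' \<union> {{0,j2}}. \<not> e \<subseteq> X \<and> \<not> e \<subseteq> Y \<and> \<not> e \<subseteq> {0,j2}}),
          ({e\<in>M1 \<union> M2 \<union> M3 \<union> {{0,j1}}. e \<subseteq> Y}, {e\<in>M1' \<union> M2' \<union> M3' \<union> {{0,j2}}. e \<subseteq> Y})))"
        unfolding q1 C_def D_def by simp
      also have "\<dots> = q" unfolding q1 by (simp only: f1 f2 f3 f1' f2' f3')
      finally show "D (C q) = q" .
    qed
    show "D ` Fib \<subseteq> PP X X \<times> (PP {j1<..j2} {j1..<j2} \<times> PP Y Y)"
    proof
      fix r assume "r \<in> D ` Fib"
      then obtain p where p0: "r = D p" "p \<in> Fib" by blast
      obtain M M' where p1: "p = (M,M')" by (cases p) auto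
      have p: "pm {0..n} M" "pm {0..n} M'" "disjoint_compatible M M'" "{0,j1} \<in> M" "{0,j2} \<in> M'"
        using p0(2) unfolding p1 Fib_def mem_Collect_eq PP_iff fst_conv snd_conv by simp_all
      have T: "pm X {e\<in>M. e \<subseteq> X} \<and> pm X {e\<in>M'. e \<subseteq> X} \<and>
        pm {j1<..j2} {e\<in>M. \<not> e \<subseteq> X \<and> \<not> e \<subseteq> Y \<and> \<not> e \<subseteq> {0,j1}} \<and>
        pm {j1..<j2} {e\<in>M'. \<not> e \<subseteq> X \<and> \<not> e \<subseteq> Y \<and> \<not> e \<subseteq> {0,j2}} \<and>
        pm Y {e\<in>M. e \<subseteq> Y} \<and> pm Y {e\<in>M'. e \<subseteq> Y}"
        unfolding X_def Y_def by (rule Tdecomp[OF j p])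
      have d1: "disjoint_compatible {e\<in>M. e \<subseteq> X} {e\<in>M'. e \<subseteq> X}" by (rule dc_mono[OF p(3)]) auto
      have d2: "disjoint_compatible {e\<in>M. \<not> e \<subseteq> X \<and> \<not> e \<subseteq> Y \<and> \<not> e \<subseteq> {0,j1}} {e\<in>M'. \<not> e \<subseteq> X \<and> \<not> e \<subseteq> Y \<and> \<not> e \<subseteq> {0,j2}}"
        by (rule dc_mono[OF p(3)]) auto
      have d3: "disjoint_compatible {e\<in>M. e \<subseteq> Y} {e\<in>M'. e \<subseteq> Y}" by (rule dc_mono[OF p(3)]) auto
      show "r \<in> PP X X \<times> (PP {j1<..j2} {j1..<j2} \<times> PP Y Y)"
        unfolding p0(1) p1 D_def case_prod_conv mem_Times_iff fst_conv snd_conv PP_iff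
        using T d1 d2 d3 by blast
    qed
    show "C ` (PP X X \<times> (PP {j1<..j2} {j1..<j2} \<times> PP Y Y)) \<subseteq> Fib"
    proof
      fix r assume "r \<in> C ` (PP X X \<times> (PP {j1<..j2} {j1..<j2} \<times> PP Y Y))"
      then obtain q where q0: "r = C q" "q \<in> PP X X \<times> (PP {j1<..j2} {j1..<j2} \<times> PP Y Y)" by blast
      obtain M1 M1' M2 M2' M3 M3' where q1: "q = ((M1,M1'),((M2,M2'),(M3,M3')))" by (cases q) auto
      have q: "pm {0<..<j1} M1" "pm {0<..<j1} M1'" "disjoint_compatible M1 M1'"
        "pm {j1<..j2} M2" "pm {j1..<j2} M2'" "disjoint_compatible M2 M2'"
        "pm {j2<..n} M3" "pm {j2<..n} M3'" "disjoint_compatible M3 M3'"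
        using q0(2) unfolding q1 mem_Times_iff fst_conv snd_conv PP_iff X_def Y_def by simp_all
      have T: "pm {0..n} (M1 \<union> M2 \<union> M3 \<union> {{0,j1}}) \<and> pm {0..n} (M1' \<union> M2' \<union> M3' \<union> {{0,j2}}) \<and>
         disjoint_compatible (M1 \<union> M2 \<union> M3 \<union> {{0,j1}}) (M1' \<union> M2' \<union> M3' \<union> {{0,j2}})"
        by (rule Tcomp[OF j q])
      show "r \<in> Fib" unfolding q0(1) q1 C_def case_prod_conv Fib_def mem_Collect_eq fst_conv snd_conv PP_iff
        using T by blast
    qed
  qed
  then have "card Fib = card (PP X X \<times> (PP {j1<..j2} {j1..<j2} \<times> PP Y Y))" by (rule bij_betw_same_card)
  then show ?thesis unfolding Fib_def X_def Y_def cnt_def by (simp add: card_cartesian_product)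
qed

lemma crosses_img:
  assumes sm: "strict_mono_on D g" and m: "a \<in> D" "b \<in> D" "c \<in> D" "d \<in> D" and o: "a < b" "c < d"
  shows "crosses {g a, g b} {g c, g d} = crosses {a,b} {c,d}"
proof -
  have l: "\<And>x y. x \<in> D \<Longrightarrow> y \<in> D \<Longrightarrow> (g x < g y) = (x < y)" using strict_mono_on_less[OF sm] by blast
  have o': "g a < g b" "g c < g d" using l m o by blast+
  show ?thesis unfolding crosses_ord[OF o'] crosses_ord[OF o]
    l[OF m(1) m(3)] l[OF m(3) m(2)] l[OF m(2) m(4)] l[OF m(3) m(1)] l[OF m(1) m(4)] l[OF m(4) m(2)] ..
qed

lemma crosses_img_e:
  assumes sm: "strict_mono_on D g" and pA: "pm A M" and pB: "pm B N" and AD: "A \<subseteq> D" "B \<subseteq> D"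
    and e: "e \<in> M" and f: "f \<in> N"
  shows "crosses (g ` e) (g ` f) = crosses e f"
proof -
  obtain a b where ab: "e = {a,b}" "a < b" "a \<in> A" "b \<in> A" using pm_edge[OF pA e] by blast
  obtain c d where cd: "f = {c,d}" "c < d" "c \<in> B" "d \<in> B" using pm_edge[OF pB f] by blast
  have "g ` e = {g a, g b}" "g ` f = {g c, g d}" using ab cd by auto
  then show ?thesis using crosses_img[OF sm _ _ _ _ ab(2) cd(2)] ab cd AD by auto
qed

lemma pm_img:
  assumes sm: "strict_mono_on D g" and SD: "S \<subseteq> D" and p: "pm S M"
  shows "pm (g ` S) ((`) g ` M)"
proof (rule pmI)
  fix e' assume "e' \<in> (`) g ` M"
  then obtain e where e: "e \<in> M" "e' = g ` e" by blast
  obtain i j where ij: "e = {i,j}" "i < j" "i \<in> S" "j \<in> S" using pm_edge[OF p e(1)] by blast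
  have "g i < g j" using strict_mono_onD[OF sm] ij SD by blast
  moreover have "e' = {g i, g j}" using e(2) ij(1) by auto
  ultimately show "\<exists>i j. e' = {i,j} \<and> i < j \<and> i \<in> g ` S \<and> j \<in> g ` S" using ij(3,4) by blast
next
  fix x assume "x \<in> g ` S"
  then obtain s where s: "s \<in> S" "x = g s" by blast
  then obtain e where "e \<in> M" "s \<in> e" using pm_ex[OF p] by blast
  then show "\<exists>e\<in>(`) g ` M. x \<in> e" using s(2) by blast
next
  fix e' f' x assume a: "e' \<in> (`) g ` M" "f' \<in> (`) g ` M" "x \<in> e'" "x \<in> f'"
  then obtain e f where ef: "e \<in> M" "f \<in> M" "e' = g ` e" "f' = g ` f" by blast
  obtain u v where uv: "u \<in> e" "v \<in> f" "x = g u" "x = g v" using a ef by blast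
  have "u \<in> D" "v \<in> D" using pm_sub[OF p ef(1)] pm_sub[OF p ef(2)] uv SD by blast+
  then have "u = v" using strict_mono_on_imp_inj_on[OF sm] uv(3,4) inj_onD by metis
  then have "e = f" using pm_uniq[OF p ef(1) ef(2)] uv by blast
  then show "e' = f'" using ef by simp
next
  fix e' f' assume a: "e' \<in> (`) g ` M" "f' \<in> (`) g ` M"
  then obtain e f where ef: "e \<in> M" "f \<in> M" "e' = g ` e" "f' = g ` f" by blast
  have "crosses e' f' = crosses e f" using crosses_img_e[OF sm p p SD SD ef(1) ef(2)] ef by simp
  then show "\<not> crosses e' f'" using pm_nc[OF p ef(1) ef(2)] by simp
qed

lemma PP_img_le:
  assumes sm: "strict_mono_on D g" and S: "S1 \<subseteq> D" "S2 \<subseteq> D" and fin: "finite (g ` S1)" "finite (g ` S2)"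
  shows "card (PP S1 S2) \<le> card (PP (g ` S1) (g ` S2))"
proof -
  define F where "F = (\<lambda>(M::nat set set, M'::nat set set). ((`) g ` M, (`) g ` M'))"
  have ij: "inj_on g D" using strict_mono_on_imp_inj_on[OF sm] .
  have ij1: "inj_on ((`) g) (Pow D)"
  proof (rule inj_onI)
    fix A B assume a: "A \<in> Pow D" "B \<in> Pow D" "g ` A = g ` B"
    have "A \<subseteq> D" "B \<subseteq> D" using a(1,2) by simp_all
    then show "A = B" using inj_on_image_eq_iff[OF ij \<open>A \<subseteq> D\<close> \<open>B \<subseteq> D\<close>] a(3) by simp
  qed
  have ij2: "inj_on ((`) ((`) g)) (Pow (Pow D))"
  proof (rule inj_onI)
    fix A B assume a: "A \<in> Pow (Pow D)" "B \<in> Pow (Pow D)" "(`) g ` A = (`) g ` B"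
    have "A \<subseteq> Pow D" "B \<subseteq> Pow D" using a(1,2) by simp_all
    then show "A = B" using inj_on_image_eq_iff[OF ij1 \<open>A \<subseteq> Pow D\<close> \<open>B \<subseteq> Pow D\<close>] a(3) by simp
  qed
  have sub: "\<And>M M'. (M,M') \<in> PP S1 S2 \<Longrightarrow> M \<in> Pow (Pow D) \<and> M' \<in> Pow (Pow D)"
    unfolding PP_iff using pm_sub S by blast
  have "inj_on F (PP S1 S2)"
  proof (rule inj_onI)
    fix p q assume p: "p \<in> PP S1 S2" and q: "q \<in> PP S1 S2" and e: "F p = F q"
    obtain M M' where p1: "p = (M,M')" by (cases p) auto
    obtain N N' where q1: "q = (N,N')" by (cases q) auto
    have "M = N" using inj_onD[OF ij2, of M N] e sub p q unfolding p1 q1 F_def by auto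
    moreover have "M' = N'" using inj_onD[OF ij2, of M' N'] e sub p q unfolding p1 q1 F_def by auto
    ultimately show "p = q" unfolding p1 q1 by simp
  qed
  moreover have "F ` PP S1 S2 \<subseteq> PP (g ` S1) (g ` S2)"
  proof
    fix r assume "r \<in> F ` PP S1 S2"
    then obtain p where p0: "r = F p" "p \<in> PP S1 S2" by blast
    obtain M M' where p1: "p = (M,M')" by (cases p) auto
    have p: "pm S1 M" "pm S2 M'" "disjoint_compatible M M'" using p0(2) unfolding p1 PP_iff by simp_all
    have a: "pm (g ` S1) ((`) g ` M)" "pm (g ` S2) ((`) g ` M')" using pm_img[OF sm S(1) p(1)] pm_img[OF sm S(2) p(2)] by blast+
    have "disjoint_compatible ((`) g ` M) ((`) g ` M')"
      unfolding disjoint_compatible_def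
    proof (intro conjI ballI)
      show "(`) g ` M \<inter> (`) g ` M' = {}"
      proof (rule ccontr)
        assume "(`) g ` M \<inter> (`) g ` M' \<noteq> {}"
        then obtain e f where ef: "e \<in> M" "f \<in> M'" "g ` e = g ` f" by blast
        have "e = f" using inj_onD[OF ij1 ef(3)] sub[OF p0(2)[unfolded p1]] ef by blast
        then show False using p(3) ef unfolding disjoint_compatible_def by blast
      qed
    next
      fix e' f' assume "e' \<in> (`) g ` M" "f' \<in> (`) g ` M'"
      then obtain e f where ef: "e \<in> M" "f \<in> M'" "e' = g ` e" "f' = g ` f" by blast
      have "crosses e' f' = crosses e f" using crosses_img_e[OF sm p(1) p(2) S ef(1) ef(2)] ef by simp
      then show "\<not> crosses e' f'" using p(3) ef unfolding disjoint_compatible_def by blast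
    qed
    then show "r \<in> PP (g ` S1) (g ` S2)" unfolding p0(1) p1 F_def case_prod_conv PP_iff using a by blast
  qed
  ultimately show ?thesis using card_inj_on_le finite_PP[OF fin] by blast
qed

lemma cnt_shift:
  assumes "finite S1" "finite S2"
  shows "cnt ((+) c ` S1) ((+) c ` S2) = cnt S1 S2"
proof -
  have sm1: "strict_mono_on UNIV ((+) (c::nat))" by (rule strict_mono_onI) simp
  have sm2: "strict_mono_on {c..} (\<lambda>x::nat. x - c)" by (rule strict_mono_onI) auto
  have le1: "cnt S1 S2 \<le> cnt ((+) c ` S1) ((+) c ` S2)"
    unfolding cnt_def by (rule PP_img_le[OF sm1]) (use assms in auto)
  have im: "(\<lambda>x. x - c) ` ((+) c ` S) = S" for S :: "nat set" by (auto simp: image_image)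
  have le2: "cnt ((+) c ` S1) ((+) c ` S2) \<le> cnt S1 S2"
  proof -
    have s: "(+) c ` S1 \<subseteq> {c..}" "(+) c ` S2 \<subseteq> {c..}" by auto
    show ?thesis using PP_img_le[OF sm2 s] assms unfolding cnt_def im by simp
  qed
  show ?thesis using le1 le2 by simp
qed

lemma cnt_iv_shift:
  fixes c l1 h1 l2 h2 :: nat
  assumes "c \<le> l1" "c \<le> l2"
  shows "cnt {l1..<h1} {l2..<h2} = cnt {l1-c..<h1-c} {l2-c..<h2-c}"
proof -
  have e: "{l..<h} = (+) c ` {l-c..<h-c}" if "c \<le> l" for l h :: nat
  proof -
    have "(+) c ` {l-c..<h-c} = {l-c+c..<h-c+c}" by simp
    also have "\<dots> = {l..<h}" using that by auto
    finally show ?thesis by simp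
  qed
  show ?thesis unfolding e[OF assms(1), of h1] e[OF assms(2), of h2] by (rule cnt_shift) auto
qed

lemma card_part_fst:
  assumes f: "finite S1" "finite S2" and Q: "Q \<subseteq> PP S1 S2" and a: "a \<in> S1"
  shows "card Q = (\<Sum>y\<in>S1 - {a}. card {p\<in>Q. {a,y} \<in> fst p})"
proof -
  have U: "Q = (\<Union>y\<in>S1 - {a}. {p\<in>Q. {a,y} \<in> fst p})"
  proof
    show "Q \<subseteq> (\<Union>y\<in>S1 - {a}. {p\<in>Q. {a,y} \<in> fst p})"
    proof
      fix p assume p: "p \<in> Q"
      then have "pm S1 (fst p)" using Q unfolding PP_def by auto
      then obtain z where "{a,z} \<in> fst p" "z \<noteq> a" "z \<in> S1" using pm_partner a by blast
      then show "p \<in> (\<Union>y\<in>S1 - {a}. {p\<in>Q. {a,y} \<in> fst p})" using p by blast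
    qed
  qed blast
  have fQ: "finite Q" using finite_subset[OF Q finite_PP[OF f]] .
  have "card (\<Union>y\<in>S1 - {a}. {p\<in>Q. {a,y} \<in> fst p}) = (\<Sum>y\<in>S1 - {a}. card {p\<in>Q. {a,y} \<in> fst p})"
  proof (rule card_UN_disjoint)
    show "finite (S1 - {a})" using f by simp
    show "\<forall>i\<in>S1 - {a}. finite {p \<in> Q. {a, i} \<in> fst p}" using fQ by simp
    show "\<forall>i\<in>S1 - {a}. \<forall>j\<in>S1 - {a}. i \<noteq> j \<longrightarrow> {p \<in> Q. {a, i} \<in> fst p} \<inter> {p \<in> Q. {a, j} \<in> fst p} = {}"
    proof (intro ballI impI)
      fix i j assume ij: "i \<in> S1 - {a}" "j \<in> S1 - {a}" "i \<noteq> j"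
      show "{p \<in> Q. {a, i} \<in> fst p} \<inter> {p \<in> Q. {a, j} \<in> fst p} = {}"
      proof (rule ccontr)
        assume "{p \<in> Q. {a, i} \<in> fst p} \<inter> {p \<in> Q. {a, j} \<in> fst p} \<noteq> {}"
        then obtain p where p: "p \<in> Q" "{a,i} \<in> fst p" "{a,j} \<in> fst p" by blast
        have "pm S1 (fst p)" using p(1) Q unfolding PP_def by auto
        then have "{a,i} = {a,j}" using pm_uniq p(2,3) by blast
        then show False using ij by (auto simp: doubleton_eq_iff)
      qed
    qed
  qed
  then show ?thesis using U by simp
qed

lemma card_part_snd:
  assumes f: "finite S1" "finite S2" and Q: "Q \<subseteq> PP S1 S2" and a: "a \<in> S2"
  shows "card Q = (\<Sum>y\<in>S2 - {a}. card {p\<in>Q. {a,y} \<in> snd p})"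
proof -
  have Q': "prod.swap ` Q \<subseteq> PP S2 S1" using Q unfolding PP_def using dc_sym by auto
  have "card (prod.swap ` Q) = (\<Sum>y\<in>S2 - {a}. card {p\<in>prod.swap ` Q. {a,y} \<in> fst p})"
    by (rule card_part_fst[OF f(2) f(1) Q' a])
  moreover have "card (prod.swap ` Q) = card Q" by (simp add: card_image)
  moreover have "\<And>y. {p\<in>prod.swap ` Q. {a,y} \<in> fst p} = prod.swap ` {p\<in>Q. {a,y} \<in> snd p}" by auto
  moreover have "\<And>y. card (prod.swap ` {p\<in>Q. {a,y} \<in> snd p}) = card {p\<in>Q. {a,y} \<in> snd p}" by (simp add: card_image)
  ultimately show ?thesis by simp
qed

definition tT :: "nat \<Rightarrow> nat" where "tT n = cnt {0..<n} {0..<n}"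
definition tV :: "nat \<Rightarrow> nat" where "tV n = cnt {1..<n} {0..<n-1}"
definition tW :: "nat \<Rightarrow> nat" where "tW n = cnt {0..<n} {1..<n-1}"

lemma PP_dc: "p \<in> PP S1 S2 \<Longrightarrow> pm S1 (fst p) \<and> pm S2 (snd p) \<and> disjoint_compatible (fst p) (snd p)"
  by (cases p) (simp add: PP_iff)

lemma PP_swap: "p \<in> PP S1 S2 \<longleftrightarrow> prod.swap p \<in> PP S2 S1"
  by (cases p) (auto simp: PP_iff dc_sym)

lemma G_use:
  fixes a y :: nat
  assumes "a < y" "RA \<subseteq> {y<..}" "RB \<subseteq> {y..}" "finite RA" "finite RB"
    "SA = insert a ({a<..<y} \<union> insert y RA)" "SB = {a<..<y} \<union> RB"
  shows "card {p \<in> PP SA SB. {a,y} \<in> fst p} = cnt {a<..<y} {a<..<y} * cnt RA RB"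
  unfolding assms(6,7) by (rule G[OF assms(1-5)])

lemma cntX: "cnt {0<..<y} {0<..<y} = tT (y - 1)"
proof -
  have "{0<..<y} = {1..<y}" by auto
  then have "cnt {0<..<y} {0<..<y} = cnt {1..<y} {1..<y}" by simp
  also have "\<dots> = cnt {1-1..<y-1} {1-1..<y-1}" by (rule cnt_iv_shift) auto
  finally show ?thesis unfolding tT_def by simp
qed

lemma cnt_T_shift: "cnt {Suc a..<b} {Suc a..<b} = tT (b - Suc a)"
proof -
  have "cnt {Suc a..<b} {Suc a..<b} = cnt {Suc a - Suc a..<b - Suc a} {Suc a - Suc a..<b - Suc a}" by (rule cnt_iv_shift) auto
  then show ?thesis unfolding tT_def by simp
qed

lemma sum_last: "(\<Sum>i=0..n. (H::nat \<Rightarrow> nat) i) = (\<Sum>i<n. H i) + H n"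
proof -
  have "{0..n} = {..<Suc n}" by auto
  then show ?thesis by simp
qed

lemma tT_0: "tT 0 = 1" unfolding tT_def using cnt_empty by simp

lemma tV_1: "tV 1 = 1" unfolding tV_def using cnt_empty by simp

lemma recT: "tT (Suc n) = 2 * (\<Sum>i=0..n. tT i * (\<Sum>m=0..n-i. (if 2 \<le> m then tV m else 0) * tT (n-i-m)))"
proof -
  define S where "S = {0..n}"
  define c where "c = (\<lambda>j1 j2. card {p\<in>PP S S. {0,j1} \<in> fst p \<and> {0,j2} \<in> snd p})"
  define A where "A = (\<lambda>m. if 2 \<le> m then tV m else 0)"
  define g where "g = (\<lambda>a b. if a < b then c a b else 0)"
  have fS: "finite S" unfolding S_def by simp
  have S1: "S - {0} = {1..n}" unfolding S_def by auto
  have e1: "tT (Suc n) = (\<Sum>j1\<in>{1..n}. \<Sum>j2\<in>{1..n}. c j1 j2)"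
  proof -
    have "{0..<Suc n} = S" unfolding S_def by auto
    then have "tT (Suc n) = card (PP S S)" unfolding tT_def cnt_def by simp
    also have "\<dots> = (\<Sum>j1\<in>S-{0}. card {p\<in>PP S S. {0,j1} \<in> fst p})"
      by (rule card_part_fst[OF fS fS]) (auto simp: S_def)
    also have "\<dots> = (\<Sum>j1\<in>S-{0}. \<Sum>j2\<in>S-{0}. c j1 j2)"
    proof (rule sum.cong[OF refl])
      fix j1 assume "j1 \<in> S-{0}"
      have "card {p\<in>PP S S. {0,j1} \<in> fst p} = (\<Sum>j2\<in>S-{0}. card {p\<in>{p\<in>PP S S. {0,j1} \<in> fst p}. {0,j2} \<in> snd p})"
        by (rule card_part_snd[OF fS fS]) (auto simp: S_def)
      also have "\<dots> = (\<Sum>j2\<in>S-{0}. c j1 j2)" unfolding c_def by (intro sum.cong refl arg_cong[where f=card]) auto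
      finally show "card {p\<in>PP S S. {0,j1} \<in> fst p} = (\<Sum>j2\<in>S-{0}. c j1 j2)" .
    qed
    finally show ?thesis unfolding S1 .
  qed
  have cdiag: "c j j = 0" for j
  proof -
    have E: "{p\<in>PP S S. {0,j} \<in> fst p \<and> {0,j} \<in> snd p} = {}"
    proof (rule ccontr)
      assume "{p\<in>PP S S. {0,j} \<in> fst p \<and> {0,j} \<in> snd p} \<noteq> {}"
      then obtain p where p: "p \<in> PP S S" "{0,j} \<in> fst p" "{0,j} \<in> snd p" by blast
      have "disjoint_compatible (fst p) (snd p)" using PP_dc[OF p(1)] by blast
      then show False using p(2,3) unfolding disjoint_compatible_def by blast
    qed
    show ?thesis unfolding c_def E by simp
  qed
  have csym: "c a b = c b a" for a b
  proof -
    have "prod.swap ` {p\<in>PP S S. {0,a} \<in> fst p \<and> {0,b} \<in> snd p} = {p\<in>PP S S. {0,b} \<in> fst p \<and> {0,a} \<in> snd p}"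
    proof (intro equalityI subsetI)
      fix x assume "x \<in> prod.swap ` {p\<in>PP S S. {0,a} \<in> fst p \<and> {0,b} \<in> snd p}"
      then obtain p where p: "x = prod.swap p" "p \<in> PP S S" "{0,a} \<in> fst p" "{0,b} \<in> snd p" by blast
      have "prod.swap p \<in> PP S S" using p(2) PP_swap by blast
      then show "x \<in> {p\<in>PP S S. {0,b} \<in> fst p \<and> {0,a} \<in> snd p}" using p by (cases p) simp
    next
      fix x assume x: "x \<in> {p\<in>PP S S. {0,b} \<in> fst p \<and> {0,a} \<in> snd p}"
      have "prod.swap x \<in> PP S S" using x PP_swap by blast
      then have "prod.swap x \<in> {p\<in>PP S S. {0,a} \<in> fst p \<and> {0,b} \<in> snd p}" using x by (cases x) simp
      moreover have "x = prod.swap (prod.swap x)" by simp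
      ultimately show "x \<in> prod.swap ` {p\<in>PP S S. {0,a} \<in> fst p \<and> {0,b} \<in> snd p}" by (rule image_eqI[rotated])
    qed
    moreover have "card (prod.swap ` {p\<in>PP S S. {0,a} \<in> fst p \<and> {0,b} \<in> snd p}) = card {p\<in>PP S S. {0,a} \<in> fst p \<and> {0,b} \<in> snd p}"
      by (simp add: card_image)
    ultimately show ?thesis unfolding c_def by simp
  qed
  have cval: "c j1 j2 = tT (j1-1) * (tV (j2-j1+1) * tT (n-j2))" if j: "0 < j1" "j1 < j2" "j2 \<le> n" for j1 j2
  proof -
    have "c j1 j2 = cnt {0<..<j1} {0<..<j1} * (cnt {j1<..j2} {j1..<j2} * cnt {j2<..n} {j2<..n})"
      unfolding c_def S_def by (rule Tfib[OF j])
    moreover have "cnt {0<..<j1} {0<..<j1} = tT (j1 - 1)" by (rule cntX)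
    moreover have "cnt {j1<..j2} {j1..<j2} = tV (j2-j1+1)"
    proof -
      have "{j1<..j2} = {Suc j1..<Suc j2}" by auto
      then have "cnt {j1<..j2} {j1..<j2} = cnt {Suc j1..<Suc j2} {j1..<j2}" by simp
      also have "\<dots> = cnt {Suc j1 - j1..<Suc j2 - j1} {j1 - j1..<j2 - j1}" by (rule cnt_iv_shift) auto
      also have "\<dots> = tV (j2-j1+1)" unfolding tV_def using j by (simp add: Suc_diff_le)
      finally show ?thesis .
    qed
    moreover have "cnt {j2<..n} {j2<..n} = tT (n-j2)"
    proof -
      have "{j2<..n} = {Suc j2..<Suc n}" by auto
      then show ?thesis using cnt_T_shift[of j2 "Suc n"] by simp
    qed
    ultimately show ?thesis by simp
  qed
  have cg: "c a b = g a b + g b a" for a b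
    unfolding g_def using cdiag[of a] csym[of a b] by (cases "a < b"; cases "b < a") auto
  have e2: "(\<Sum>j1\<in>{1..n}. \<Sum>j2\<in>{1..n}. c j1 j2) = 2 * (\<Sum>j1\<in>{1..n}. \<Sum>j2\<in>{1..n}. g j1 j2)"
  proof -
    have "(\<Sum>j1\<in>{1..n}. \<Sum>j2\<in>{1..n}. c j1 j2) = (\<Sum>j1\<in>{1..n}. \<Sum>j2\<in>{1..n}. g j1 j2 + g j2 j1)"
      unfolding cg ..
    also have "\<dots> = (\<Sum>j1\<in>{1..n}. \<Sum>j2\<in>{1..n}. g j1 j2) + (\<Sum>j1\<in>{1..n}. \<Sum>j2\<in>{1..n}. g j2 j1)"
      by (simp add: sum.distrib)
    also have "(\<Sum>j1\<in>{1..n}. \<Sum>j2\<in>{1..n}. g j2 j1) = (\<Sum>j1\<in>{1..n}. \<Sum>j2\<in>{1..n}. g j1 j2)"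
      by (rule sum.swap)
    finally show ?thesis by simp
  qed
  have inner: "(\<Sum>j2\<in>{1..n}. g (Suc i) j2) = tT i * (\<Sum>m=0..n-i. A m * tT (n-i-m))" if i: "i < n" for i
  proof -
    have "(\<Sum>j2\<in>{1..n}. g (Suc i) j2) = (\<Sum>j2\<in>{0..n}. g (Suc i) j2)"
      by (rule sum.mono_neutral_left) (auto simp: g_def)
    also have "\<dots> = (\<Sum>j2\<in>{0..n}. tT i * (A (j2 - i) * tT (n - j2)))"
    proof (rule sum.cong[OF refl])
      fix j2 assume j2: "j2 \<in> {0..n}"
      show "g (Suc i) j2 = tT i * (A (j2 - i) * tT (n - j2))"
      proof (cases "Suc i < j2")
        case True
        have "g (Suc i) j2 = c (Suc i) j2" using True by (simp add: g_def)
        also have "\<dots> = tT (Suc i - 1) * (tV (j2 - Suc i + 1) * tT (n - j2))"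
          using cval[of "Suc i" j2] True j2 by simp
        also have "\<dots> = tT i * (A (j2 - i) * tT (n - j2))"
        proof -
          have "j2 - Suc i + 1 = j2 - i" using True by simp
          moreover have "A (j2 - i) = tV (j2 - i)" using True by (simp add: A_def)
          ultimately show ?thesis by simp
        qed
        finally show ?thesis .
      next
        case False
        then have "A (j2 - i) = 0" by (simp add: A_def)
        then show ?thesis using False by (simp add: g_def)
      qed
    qed
    also have "\<dots> = (\<Sum>j2\<in>{i..n}. tT i * (A (j2 - i) * tT (n - j2)))"
      by (rule sum.mono_neutral_right) (auto simp: A_def)
    also have "\<dots> = (\<Sum>m\<in>{0..n-i}. tT i * (A (m + i - i) * tT (n - (m + i))))"
    proof -
      have "{i..n} = {0+i..(n-i)+i}" using i by simp
      then show ?thesis using sum.shift_bounds_cl_nat_ivl[of "\<lambda>j2. tT i * (A (j2 - i) * tT (n - j2))" 0 i "n-i"] by simp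
    qed
    also have "\<dots> = (\<Sum>m\<in>{0..n-i}. tT i * (A m * tT (n - i - m)))"
      by (rule sum.cong[OF refl]) (simp add: diff_diff_left add.commute)
    also have "\<dots> = tT i * (\<Sum>m=0..n-i. A m * tT (n-i-m))" by (simp add: sum_distrib_left)
    finally show ?thesis .
  qed
  have e3: "(\<Sum>j1\<in>{1..n}. \<Sum>j2\<in>{1..n}. g j1 j2) = (\<Sum>i=0..n. tT i * (\<Sum>m=0..n-i. A m * tT (n-i-m)))"
  proof -
    have "(\<Sum>j1\<in>{1..n}. \<Sum>j2\<in>{1..n}. g j1 j2) = (\<Sum>i<n. \<Sum>j2\<in>{1..n}. g (Suc i) j2)"
      using sum.atLeast1_atMost_eq[of "\<lambda>j1. \<Sum>j2\<in>{1..n}. g j1 j2" n] by simp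
    also have "\<dots> = (\<Sum>i<n. tT i * (\<Sum>m=0..n-i. A m * tT (n-i-m)))"
      by (rule sum.cong[OF refl], rule inner, simp)
    also have "\<dots> = (\<Sum>i=0..n. tT i * (\<Sum>m=0..n-i. A m * tT (n-i-m)))"
      using sum_last[of "\<lambda>i. tT i * (\<Sum>m=0..n-i. A m * tT (n-i-m))" n] by (simp add: A_def)
    finally show ?thesis .
  qed
  show ?thesis using e1 e2 e3 unfolding A_def by simp
qed

lemma recV: "(if 2 \<le> Suc m then tV (Suc m) else 0) = (\<Sum>i=0..m. tT i * (if 2 \<le> m - i then tW (m - i) else 0))"
proof (cases "m = 0")
  case True then show ?thesis by simp
next
  case False
  then have m: "1 \<le> m" by simp
  define S1 where "S1 = {0..<m}"
  define S2 where "S2 = {1..<Suc m}"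
  have f: "finite S1" "finite S2" unfolding S1_def S2_def by simp_all
  have "tV (Suc m) = cnt S1 S2" unfolding tV_def S1_def S2_def using cnt_swap by simp
  also have "\<dots> = (\<Sum>y\<in>S1 - {0}. card {p\<in>PP S1 S2. {0,y} \<in> fst p})"
    unfolding cnt_def by (rule card_part_fst[OF f]) (use m in \<open>auto simp: S1_def\<close>)
  also have "\<dots> = (\<Sum>y\<in>{1..<m}. tT (y - 1) * tW (Suc m - y))"
  proof -
    have "S1 - {0} = {1..<m}" unfolding S1_def by auto
    moreover have "card {p\<in>PP S1 S2. {0,y} \<in> fst p} = tT (y - 1) * tW (Suc m - y)" if y: "y \<in> {1..<m}" for y
    proof -
      have "card {p\<in>PP S1 S2. {0,y} \<in> fst p} = cnt {0<..<y} {0<..<y} * cnt {y<..<m} {y..<Suc m}"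
        by (rule G_use) (use y in \<open>auto simp: S1_def S2_def\<close>)
      moreover have "cnt {y<..<m} {y..<Suc m} = tW (Suc m - y)"
      proof -
        have "{y<..<m} = {Suc y..<m}" by auto
        then have "cnt {y<..<m} {y..<Suc m} = cnt {y..<Suc m} {Suc y..<m}" using cnt_swap by simp
        also have "\<dots> = cnt {y - y..<Suc m - y} {Suc y - y..<m - y}" by (rule cnt_iv_shift) auto
        also have "\<dots> = tW (Suc m - y)" unfolding tW_def using y by simp
        finally show ?thesis .
      qed
      ultimately show ?thesis using cntX by simp
    qed
    ultimately show ?thesis by simp
  qed
  also have "\<dots> = (\<Sum>i\<in>{0..<m-1}. tT i * tW (m - i))"
  proof -
    have "{1..<m} = {0+1..<(m-1)+1}" using m by simp
    then have "(\<Sum>y\<in>{1..<m}. tT (y - 1) * tW (Suc m - y)) = (\<Sum>i\<in>{0..<m-1}. tT (i + 1 - 1) * tW (Suc m - (i + 1)))"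
      using sum.shift_bounds_nat_ivl[of "\<lambda>y. tT (y - 1) * tW (Suc m - y)" 0 1 "m-1"] by simp
    then show ?thesis by simp
  qed
  also have "\<dots> = (\<Sum>i\<in>{0..<m-1}. tT i * (if 2 \<le> m - i then tW (m - i) else 0))"
    by (rule sum.cong[OF refl]) auto
  also have "\<dots> = (\<Sum>i=0..m. tT i * (if 2 \<le> m - i then tW (m - i) else 0))"
    by (rule sum.mono_neutral_left) auto
  finally show ?thesis by simp
qed

lemma recW: "(if 2 \<le> Suc p then tW (Suc p) else 0) = (\<Sum>i=0..p. tT i * (if 1 \<le> p - i then tV (p - i) else 0))"
proof (cases "p = 0")
  case True then show ?thesis by simp
next
  case False
  then have p: "1 \<le> p" by simp
  define S1 where "S1 = {0..<Suc p}"
  define S2 where "S2 = {1..<p}"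
  have f: "finite S1" "finite S2" unfolding S1_def S2_def by simp_all
  have "tW (Suc p) = cnt S1 S2" unfolding tW_def S1_def S2_def by simp
  also have "\<dots> = (\<Sum>y\<in>S1 - {0}. card {q\<in>PP S1 S2. {0,y} \<in> fst q})"
    unfolding cnt_def by (rule card_part_fst[OF f]) (auto simp: S1_def)
  also have "\<dots> = (\<Sum>y\<in>{1..<Suc p}. tT (y - 1) * tV (Suc p - y))"
  proof -
    have "S1 - {0} = {1..<Suc p}" unfolding S1_def by auto
    moreover have "card {q\<in>PP S1 S2. {0,y} \<in> fst q} = tT (y - 1) * tV (Suc p - y)" if y: "y \<in> {1..<Suc p}" for y
    proof -
      have "card {q\<in>PP S1 S2. {0,y} \<in> fst q} = cnt {0<..<y} {0<..<y} * cnt {y<..<Suc p} {y..<p}"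
        by (rule G_use) (use y in \<open>auto simp: S1_def S2_def\<close>)
      moreover have "cnt {y<..<Suc p} {y..<p} = tV (Suc p - y)"
      proof -
        have "{y<..<Suc p} = {Suc y..<Suc p}" by auto
        then have "cnt {y<..<Suc p} {y..<p} = cnt {Suc y..<Suc p} {y..<p}" by simp
        also have "\<dots> = cnt {Suc y - y..<Suc p - y} {y - y..<p - y}" by (rule cnt_iv_shift) auto
        also have "\<dots> = tV (Suc p - y)" unfolding tV_def using y by simp
        finally show ?thesis .
      qed
      ultimately show ?thesis using cntX by simp
    qed
    ultimately show ?thesis by simp
  qed
  also have "\<dots> = (\<Sum>i\<in>{0..<p}. tT i * tV (p - i))"
  proof -
    have "(\<Sum>y\<in>{1..<Suc p}. tT (y - 1) * tV (Suc p - y)) = (\<Sum>i\<in>{0..<p}. tT (i + 1 - 1) * tV (Suc p - (i + 1)))"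
      using sum.shift_bounds_nat_ivl[of "\<lambda>y. tT (y - 1) * tV (Suc p - y)" 0 1 p] by simp
    then show ?thesis by simp
  qed
  also have "\<dots> = (\<Sum>i\<in>{0..<p}. tT i * (if 1 \<le> p - i then tV (p - i) else 0))"
    by (rule sum.cong[OF refl]) auto
  also have "\<dots> = (\<Sum>i=0..p. tT i * (if 1 \<le> p - i then tV (p - i) else 0))"
    by (rule sum.mono_neutral_left) auto
  finally show ?thesis by simp
qed

lemma tT_odd: "odd n \<Longrightarrow> tT n = 0"
proof -
  assume o: "odd n"
  have "PP {0..<n} {0..<n} = {}"
  proof (rule ccontr)
    assume "PP {0..<n} {0..<n} \<noteq> {}"
    then obtain p where "p \<in> PP {0..<n} {0..<n}" by blast
    then have "pm {0..<n} (fst p)" using PP_dc by blast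
    then have "even (card {0..<n})" using pm_even[of "{0..<n}"] by simp
    then show False using o by simp
  qed
  then show ?thesis unfolding tT_def cnt_def by simp
qed

lemma dcm_adj_PP: "dcm_adj k M M' \<longleftrightarrow> (M,M') \<in> PP {0..<2*k} {0..<2*k}"
  unfolding dcm_adj_def PP_iff is_matching_pm by simp

lemma dcm_card: assumes k: "1 \<le> k" shows "tT (2*k) = 2 * card (dcm_edge_set k)"
proof -
  define S where "S = {0..<2*k}"
  define R where "R = PP S S"
  have fR: "finite R" unfolding R_def S_def by (rule finite_PP) simp_all
  have neq: "M \<noteq> M'" if "(M,M') \<in> R" for M M'
  proof
    assume eq: "M = M'"
    have p: "pm S M" "disjoint_compatible M M'" using that unfolding R_def PP_iff by simp_all
    have "0 \<in> S" unfolding S_def using k by simp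
    then obtain e where "e \<in> M" "0 \<in> e" using pm_ex[OF p(1)] by blast
    then show False using p(2) eq unfolding disjoint_compatible_def by blast
  qed
  have sym: "(M',M) \<in> R" if "(M,M') \<in> R" for M M'
    using that PP_swap[of "(M,M')"] unfolding R_def by simp
  define E where "E = dcm_edge_set k"
  have Eeq: "E = (\<lambda>p. {fst p, snd p}) ` R"
    unfolding E_def dcm_edge_set_def R_def S_def dcm_adj_PP by force
  have fE: "finite E" unfolding Eeq using fR by simp
  have RU: "R = (\<Union>e\<in>E. {p\<in>R. {fst p, snd p} = e})" unfolding Eeq by blast
  have c2: "card {p\<in>R. {fst p, snd p} = e} = 2" if e: "e \<in> E" for e
  proof -
    obtain M M' where MM: "(M,M') \<in> R" "e = {M,M'}" using e unfolding Eeq by force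
    have "{p\<in>R. {fst p, snd p} = e} = {(M,M'),(M',M)}"
    proof (intro equalityI subsetI)
      fix p assume "p \<in> {p\<in>R. {fst p, snd p} = e}"
      then have "{fst p, snd p} = {M,M'}" using MM by simp
      then have "p = (M,M') \<or> p = (M',M)" by (cases p) (auto simp: doubleton_eq_iff)
      then show "p \<in> {(M,M'),(M',M)}" by blast
    next
      fix p assume "p \<in> {(M,M'),(M',M)}"
      then show "p \<in> {p\<in>R. {fst p, snd p} = e}" using MM sym[OF MM(1)] by auto
    qed
    moreover have "(M,M') \<noteq> (M',M)" using neq[OF MM(1)] by simp
    ultimately show ?thesis by simp
  qed
  have "card R = (\<Sum>e\<in>E. card {p\<in>R. {fst p, snd p} = e})"
  proof -
    have "card (\<Union>e\<in>E. {p\<in>R. {fst p, snd p} = e}) = (\<Sum>e\<in>E. card {p\<in>R. {fst p, snd p} = e})"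
      by (rule card_UN_disjoint) (use fE fR in auto)
    then show ?thesis using RU by simp
  qed
  also have "\<dots> = (\<Sum>e\<in>E. 2)" using c2 by (meson sum.cong)
  also have "\<dots> = 2 * card E" by simp
  finally show ?thesis unfolding tT_def cnt_def R_def S_def E_def by simp
qed

lemma compose_X2_nth:
  fixes F :: "rat fps"
  shows "fps_nth (F oo fps_X ^ 2) n = (if even n then fps_nth F (n div 2) else 0)"
proof -
  have "fps_nth (F oo fps_X ^ 2) n = (\<Sum>i=0..n. fps_nth F i * fps_nth ((fps_X ^ 2) ^ i) n)" by (rule fps_compose_nth)
  also have "\<dots> = (\<Sum>i=0..n. if i = n div 2 then (if even n then fps_nth F i else 0) else 0)"
  proof (rule sum.cong[OF refl])
    fix i assume "i \<in> {0..n}"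
    have "((fps_X ^ 2) ^ i :: rat fps) = fps_X ^ (2 * i)" by (simp add: power_mult)
    then have "fps_nth F i * fps_nth ((fps_X ^ 2) ^ i) n = (if n = 2 * i then fps_nth F i else 0)" by (simp add: fps_X_power_nth)
    also have "\<dots> = (if i = n div 2 then (if even n then fps_nth F i else 0) else 0)" by auto
    finally show "fps_nth F i * fps_nth ((fps_X ^ 2) ^ i) n = (if i = n div 2 then (if even n then fps_nth F i else 0) else 0)" .
  qed
  also have "\<dots> = (if even n then fps_nth F (n div 2) else 0)" by (subst sum.delta) auto
  finally show ?thesis .
qed

lemma fps_eqs:
  defines "Zt \<equiv> Abs_fps (\<lambda>n. of_nat (tT n) :: rat)"
    and "Af \<equiv> Abs_fps (\<lambda>m. of_nat (if 2 \<le> m then tV m else 0) :: rat)"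
    and "Bf \<equiv> Abs_fps (\<lambda>p. of_nat (if 2 \<le> p then tW p else 0) :: rat)"
    and "Cf \<equiv> Abs_fps (\<lambda>q. of_nat (if 1 \<le> q then tV q else 0) :: rat)"
  shows "Zt = 1 + fps_X * (Zt * (Af * Zt) + Zt * (Af * Zt))"
    and "Af = fps_X * (Zt * Bf)"
    and "Bf = fps_X * (Zt * Cf)"
    and "Cf = fps_X + Af"
proof -
  show "Zt = 1 + fps_X * (Zt * (Af * Zt) + Zt * (Af * Zt))"
  proof (rule fps_ext)
    fix n
    show "fps_nth Zt n = fps_nth (1 + fps_X * (Zt * (Af * Zt) + Zt * (Af * Zt))) n"
    proof (cases n)
      case 0 then show ?thesis by (simp add: Zt_def tT_0)
    next
      case (Suc k)
      have a: "fps_nth (1 + fps_X * (Zt * (Af * Zt) + Zt * (Af * Zt))) n = fps_nth (Zt * (Af * Zt)) k + fps_nth (Zt * (Af * Zt)) k"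
        unfolding Suc fps_add_nth fps_X_mult_nth fps_one_nth by simp
      have b: "fps_nth (Zt * (Af * Zt)) k = (\<Sum>i=0..k. of_nat (tT i) * (\<Sum>m=0..k-i. of_nat (if 2 \<le> m then tV m else 0) * of_nat (tT (k-i-m))))"
        unfolding fps_mult_nth Zt_def Af_def fps_nth_Abs_fps ..
      have c: "(of_nat (tT (Suc k)) :: rat) = 2 * (\<Sum>i=0..k. of_nat (tT i) * (\<Sum>m=0..k-i. of_nat (if 2 \<le> m then tV m else 0) * of_nat (tT (k-i-m))))"
        unfolding recT[of k] of_nat_mult of_nat_sum by simp
      show ?thesis unfolding a b unfolding Suc Zt_def fps_nth_Abs_fps c by simp
    qed
  qed
  show "Af = fps_X * (Zt * Bf)"
  proof (rule fps_ext)
    fix n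
    show "fps_nth Af n = fps_nth (fps_X * (Zt * Bf)) n"
    proof (cases n)
      case 0 then show ?thesis by (simp add: Af_def)
    next
      case (Suc k)
      have a: "fps_nth (fps_X * (Zt * Bf)) n = fps_nth (Zt * Bf) k"
        unfolding Suc fps_X_mult_nth by simp
      have b: "fps_nth (Zt * Bf) k = (\<Sum>i=0..k. of_nat (tT i) * of_nat (if 2 \<le> k - i then tW (k - i) else 0))"
        unfolding fps_mult_nth Zt_def Bf_def fps_nth_Abs_fps ..
      have c: "(of_nat (if 2 \<le> Suc k then tV (Suc k) else 0) :: rat) = (\<Sum>i=0..k. of_nat (tT i) * of_nat (if 2 \<le> k - i then tW (k - i) else 0))"
        unfolding recV[of k] of_nat_sum of_nat_mult ..
      show ?thesis unfolding a b unfolding Suc Af_def fps_nth_Abs_fps c ..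
    qed
  qed
  show "Bf = fps_X * (Zt * Cf)"
  proof (rule fps_ext)
    fix n
    show "fps_nth Bf n = fps_nth (fps_X * (Zt * Cf)) n"
    proof (cases n)
      case 0 then show ?thesis by (simp add: Bf_def)
    next
      case (Suc k)
      have a: "fps_nth (fps_X * (Zt * Cf)) n = fps_nth (Zt * Cf) k"
        unfolding Suc fps_X_mult_nth by simp
      have b: "fps_nth (Zt * Cf) k = (\<Sum>i=0..k. of_nat (tT i) * of_nat (if 1 \<le> k - i then tV (k - i) else 0))"
        unfolding fps_mult_nth Zt_def Cf_def fps_nth_Abs_fps ..
      have c: "(of_nat (if 2 \<le> Suc k then tW (Suc k) else 0) :: rat) = (\<Sum>i=0..k. of_nat (tT i) * of_nat (if 1 \<le> k - i then tV (k - i) else 0))"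
        unfolding recW[of k] of_nat_sum of_nat_mult ..
      show ?thesis unfolding a b unfolding Suc Bf_def fps_nth_Abs_fps c ..
    qed
  qed
  show "Cf = fps_X + Af"
  proof (rule fps_ext)
    fix n
    show "fps_nth Cf n = fps_nth (fps_X + Af) n"
      unfolding Cf_def Af_def using tV_1 by (cases "n = 1") auto
  qed
qed

lemma fps_t_eq:
  defines "Zt \<equiv> Abs_fps (\<lambda>n. of_nat (tT n) :: rat)"
  shows "Zt * (1 - fps_X ^ 2 * Zt ^ 2) = (1 - fps_X ^ 2 * Zt ^ 2) + (fps_X ^ 4 * Zt ^ 4 + fps_X ^ 4 * Zt ^ 4)"
proof -
  define Af where "Af = Abs_fps (\<lambda>m. of_nat (if 2 \<le> m then tV m else 0) :: rat)"
  define Bf where "Bf = Abs_fps (\<lambda>p. of_nat (if 2 \<le> p then tW p else 0) :: rat)"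
  define Cf where "Cf = Abs_fps (\<lambda>q. of_nat (if 1 \<le> q then tV q else 0) :: rat)"
  note E = fps_eqs[folded Zt_def Af_def Bf_def Cf_def]
  have h0: "Af = fps_X * (Zt * (fps_X * (Zt * (fps_X + Af))))"
  proof -
    have "Af = fps_X * (Zt * Bf)" by (rule E(2))
    also have "\<dots> = fps_X * (Zt * (fps_X * (Zt * (fps_X + Af))))" by (simp only: E(3) E(4))
    finally show ?thesis .
  qed
  have h1: "Zt = 1 + fps_X * (Zt * (Af * Zt) + Zt * (Af * Zt))" by (rule E(1))
  have e: "fps_X * (Zt * (fps_X * (Zt * (fps_X + Af)))) = fps_X ^ 3 * Zt ^ 2 + fps_X ^ 2 * Zt ^ 2 * Af" by algebra
  have h0': "Af = fps_X ^ 3 * Zt ^ 2 + fps_X ^ 2 * Zt ^ 2 * Af" using h0 e by simp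
  have s0: "Af * (1 - fps_X ^ 2 * Zt ^ 2) = Af - fps_X ^ 2 * Zt ^ 2 * Af" by algebra
  have s1: "Af - fps_X ^ 2 * Zt ^ 2 * Af = (fps_X ^ 3 * Zt ^ 2 + fps_X ^ 2 * Zt ^ 2 * Af) - fps_X ^ 2 * Zt ^ 2 * Af"
    using arg_cong[OF h0', of "\<lambda>u. u - fps_X ^ 2 * Zt ^ 2 * Af"] .
  have s2: "Af * (1 - fps_X ^ 2 * Zt ^ 2) = fps_X ^ 3 * Zt ^ 2" using s0 s1 by simp
  have g1: "Zt - 1 = fps_X * (Zt * (Af * Zt) + Zt * (Af * Zt))" using arg_cong[OF h1, of "\<lambda>u. u - 1"] by simp
  have g2: "fps_X * (Zt * (Af * Zt) + Zt * (Af * Zt)) * (1 - fps_X ^ 2 * Zt ^ 2)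
      = (fps_X * Zt ^ 2 + fps_X * Zt ^ 2) * (Af * (1 - fps_X ^ 2 * Zt ^ 2))" by algebra
  have g3: "(fps_X * Zt ^ 2 + fps_X * Zt ^ 2) * (fps_X ^ 3 * Zt ^ 2) = fps_X ^ 4 * Zt ^ 4 + fps_X ^ 4 * Zt ^ 4" by algebra
  have g4: "Zt * (1 - fps_X ^ 2 * Zt ^ 2) = (1 - fps_X ^ 2 * Zt ^ 2) + (Zt - 1) * (1 - fps_X ^ 2 * Zt ^ 2)" by algebra
  show ?thesis unfolding g4 g1 g2 s2 g3 ..
qed

theorem mainTheorem19:
  fixes z Z :: "rat fps"
  assumes "z = Abs_fps (\<lambda>k. of_nat (dcm_d k))"
    and "Z = 2 * z - 1"
  shows "Z = 1 + (2 * fps_X ^ 2 * Z ^ 4) / (1 - fps_X * Z ^ 2)"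
proof -
  define Zt where "Zt = Abs_fps (\<lambda>n. of_nat (tT n) :: rat)"
  have Zc: "fps_nth Z k = of_nat (tT (2 * k))" for k
  proof -
    have ZE: "Z = z + z - 1" unfolding assms(2) mult_2 ..
    have zk: "fps_nth z k = of_nat (dcm_d k)" unfolding assms(1) by simp
    have "fps_nth Z k = of_nat (dcm_d k) + of_nat (dcm_d k) - (if k = 0 then 1 else 0)"
      unfolding ZE fps_add_nth fps_sub_nth fps_one_nth zk ..
    also have "\<dots> = of_nat (tT (2 * k))"
    proof (cases "k = 0")
      case True then show ?thesis by (simp add: dcm_d_def tT_0)
    next
      case False
      then have "tT (2*k) = 2 * card (dcm_edge_set k)" using dcm_card by simp
      moreover have "dcm_d k = card (dcm_edge_set k)" using False by (simp add: dcm_d_def)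
      ultimately have "tT (2*k) = dcm_d k + dcm_d k" by simp
      then show ?thesis using False by simp
    qed
    finally show ?thesis .
  qed
  have ZZ: "Zt = Z oo fps_X ^ 2"
  proof (rule fps_ext)
    fix n
    show "fps_nth Zt n = fps_nth (Z oo fps_X ^ 2) n"
      unfolding compose_X2_nth Zc Zt_def using tT_odd by auto
  qed
  define Y where "Y = (fps_X ^ 2 :: rat fps)"
  define W where "W = Z oo Y"
  have c0: "fps_nth Y 0 = 0" unfolding Y_def by simp
  have WZ: "W = Zt" unfolding W_def Y_def ZZ ..
  define P where "P = Z * (1 - fps_X * Z ^ 2) - ((1 - fps_X * Z ^ 2) + (fps_X ^ 2 * Z ^ 4 + fps_X ^ 2 * Z ^ 4))"
  have "P oo Y = W * (1 - Y * W ^ 2) - ((1 - Y * W ^ 2) + (Y ^ 2 * W ^ 4 + Y ^ 2 * W ^ 4))"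
    unfolding P_def W_def
    by (simp only: fps_compose_sub_distrib fps_compose_add_distrib fps_compose_mult_distrib[OF c0]
        fps_compose_power[OF c0, symmetric] fps_compose_1 fps_X_fps_compose_startby0[OF c0])
  also have "\<dots> = Zt * (1 - fps_X ^ 2 * Zt ^ 2) - ((1 - fps_X ^ 2 * Zt ^ 2) + (fps_X ^ 4 * Zt ^ 4 + fps_X ^ 4 * Zt ^ 4))"
  proof -
    have "Y ^ 2 = (fps_X ^ 4 :: rat fps)" unfolding Y_def by (simp add: power_mult[symmetric])
    then show ?thesis unfolding WZ by (simp only: Y_def)
  qed
  also have "\<dots> = 0" using fps_t_eq[folded Zt_def] by simp
  finally have P0: "P oo fps_X ^ 2 = 0" unfolding Y_def .
  have "P = 0"
  proof (rule fps_ext)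
    fix k
    have "fps_nth (P oo fps_X ^ 2) (2 * k) = fps_nth P k" unfolding compose_X2_nth by simp
    then show "fps_nth P k = fps_nth 0 k" using P0 by simp
  qed
  then have key0: "Z * (1 - fps_X * Z ^ 2) = (1 - fps_X * Z ^ 2) + (fps_X ^ 2 * Z ^ 4 + fps_X ^ 2 * Z ^ 4)"
    unfolding P_def by (rule right_minus_eq[THEN iffD1])
  have tw: "fps_X ^ 2 * Z ^ 4 + fps_X ^ 2 * Z ^ 4 = 2 * fps_X ^ 2 * Z ^ 4" by algebra
  define D where "D = 1 - fps_X * Z ^ 2"
  define B where "B = 2 * fps_X ^ 2 * Z ^ 4"
  have key: "Z * D = D + B" using key0 unfolding D_def B_def tw .
  have D0: "fps_nth D 0 \<noteq> 0" unfolding D_def by simp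
  have DI: "D * inverse D = 1" by (rule inverse_mult_eq_1'[OF D0])
  have "1 + B / D = 1 + B * inverse D" by (simp only: fps_divide_unit[OF D0])
  also have "\<dots> = D * inverse D + B * inverse D" unfolding DI ..
  also have "\<dots> = (D + B) * inverse D" by (rule distrib_right[symmetric])
  also have "\<dots> = Z * D * inverse D" unfolding key ..
  also have "\<dots> = Z" unfolding mult.assoc DI by simp
  finally show ?thesis unfolding D_def B_def by simp
qed

end
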